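(* Let $\iota:\mathcal{F}\to\mathcal{F}_{quad}$ be the precomposition functor $\iota(F)=F\circ\epsilon$, where $\epsilon:\mathcal{T}_q\to\mathcal{E}^f$ is the forgetful functor described in the context. Then: (1) $\iota$ is exact; (2) $\iota$ preserves tensor products (pointwise tensor products over $\mathbb{F}_2$); (3) $\iota$ is fully faithful; (4) if $S$ is a simple object of $\mathcal{F}$, then $\iota(S)$ is a simple object of $\mathcal{F}_{quad}$.
   Context: All vector spaces are over $\mathbb{F}_2$. $\mathcal{E}$ is the category of all $\mathbb{F}_2$-vector spaces, $\mathcal{E}^f$ its full subcategory of finite-dimensional spaces, and $\mathcal{F}=\mathrm{Func}(\mathcal{E}^f,\mathcal{E})$. A quadratic form on a finite-dimensional $V$ is a map $q:V\to\mathbb{F}_2$ such that $B(x,y)=q(x+y)+q(x)+q(y)$ is bilinear; $(V,q)$ is non-degenerate if $\{v: B(v,w)=0\ \forall w\}=0$. $\mathcal{E}_q$ is the category whose objects are finite-dimensional non-degenerate quadratic spaces and whose morphisms are linear maps preserving the quadratic forms (these are injective). For $f:V\to W$ in $\mathcal{E}_q$, $W=f(V)\perp V'$ with $V'$ the orthogonal complement of $f(V)$. Pseudo push-out: given $f:V\to W=f(V)\perp V'$ and $g:V\to X=g(V)\perp V''$ in $\mathcal{E}_q$, set $W\perp_V X=V\perp V'\perp V''$, with the maps $W\to V\perp V'\perp V''$, $f(v)+v'\mapsto v+v'$, and $X\to V\perp V'\perp V''$, $g(v)+v''\mapsto v+v''$. The category $\mathcal{T}_q$: objects are those of $\mathcal{E}_q$;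 a morphism $V\to W$ is represented by a diagram $V\xrightarrow{f}X\xleftarrow{g}W$ in $\mathcal{E}_q$, written $[V\xrightarrow{f}X\xleftarrow{g}W]$; two such diagrams $[V\to X_1\leftarrow W]$, $[V\to X_2\leftarrow W]$ are identified under the equivalence relation generated by: there exists a morphism $\alpha:X_1\to X_2$ in $\mathcal{E}_q$ making both triangles commute. Composition of $[V\to X_1\leftarrow W]$ followed by $[W\to X_2\leftarrow Y]$ is $[V\to X_1\perp_W X_2\leftarrow Y]$ using the pseudo push-out of $X_1\leftarrow W\to X_2$. Then $\mathcal{F}_{quad}=\mathrm{Func}(\mathcal{T}_q,\mathcal{E})$. The functor $\epsilon:\mathcal{T}_q\to\mathcal{E}^f$ sends $V$ to its underlying vector space and $[V\xrightarrow{f}X\xleftarrow{g}W]$ to $p_g\circ f$, where, writing $X=g(W)\perp W'$, $p_g:X\to W$ is the orthogonal projection onto $g(W)$ followed by $g^{-1}$ (this is well defined and functorial). *)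

theory Defs
  imports Main "HOL-Library.Z2" "HOL-Library.Function_Algebras"
begin

text \<open>An F2-vector space is a subgroup of exponent 2 of an ambient abelian group
 (scalar multiplication by 0 and 1 is then determined); linear maps are additive maps.\<close>

definition F2sp :: "'v::ab_group_add set \<Rightarrow> bool" where
  "F2sp A \<longleftrightarrow> 0 \<in> A \<and> (\<forall>x\<in>A. \<forall>y\<in>A. x + y \<in> A) \<and> (\<forall>x\<in>A. x + x = 0)"

definition F2lin :: "'v::ab_group_add set \<Rightarrow> 'w::ab_group_add set \<Rightarrow> ('v \<Rightarrow> 'w) \<Rightarrow> bool" where
  "F2lin A B h \<longleftrightarrow> (\<forall>x\<in>A. h x \<in> B) \<and> (\<forall>x\<in>A. \<forall>y\<in>A. h (x + y) = h x + h y)"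

definition short_exact ::
  "'a::ab_group_add set \<Rightarrow> 'b::ab_group_add set \<Rightarrow> 'c::ab_group_add set \<Rightarrow> ('a \<Rightarrow> 'b) \<Rightarrow> ('b \<Rightarrow> 'c) \<Rightarrow> bool" where
  "short_exact A B C f g \<longleftrightarrow> F2lin A B f \<and> F2lin B C g \<and> inj_on f A
      \<and> f ` A = {y \<in> B. g y = 0} \<and> g ` B = C"

section \<open>The category E^f (skeleton: objects n = F2^n)\<close>

type_synonym vec = "nat \<Rightarrow> bit"

definition fvec :: "nat \<Rightarrow> vec set" where
  "fvec n = {x. \<forall>i\<ge>n. x i = 0}"

definition Ef_map :: "nat \<Rightarrow> nat \<Rightarrow> (vec \<Rightarrow> vec) \<Rightarrow> bool" where
  "Ef_map n m f \<longleftrightarrow> (\<forall>x\<in>fvec n. f x \<in> fvec m)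
      \<and> (\<forall>x\<in>fvec n. \<forall>y\<in>fvec n. f (x + y) = f x + f y)
      \<and> (\<forall>x. x \<notin> fvec n \<longrightarrow> f x = 0)"

definition fid :: "nat \<Rightarrow> vec \<Rightarrow> vec" where
  "fid n = (\<lambda>x. if x \<in> fvec n then x else 0)"

type_synonym ef_mor = "nat \<times> nat \<times> (vec \<Rightarrow> vec)"

definition is_Ffunctor :: "(nat \<Rightarrow> 'v::ab_group_add set) \<Rightarrow> (ef_mor \<Rightarrow> 'v \<Rightarrow> 'v) \<Rightarrow> bool" where
  "is_Ffunctor Fo Fm \<longleftrightarrow> (\<forall>n. F2sp (Fo n))
     \<and> (\<forall>n m f. Ef_map n m f \<longrightarrow> F2lin (Fo n) (Fo m) (Fm (n, m, f)))
     \<and> (\<forall>n. \<forall>x\<in>Fo n. Fm (n, n, fid n) x = x)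
     \<and> (\<forall>n m k f g. Ef_map n m f \<longrightarrow> Ef_map m k g \<longrightarrow>
          (\<forall>x\<in>Fo n. Fm (n, k, g \<circ> f) x = Fm (m, k, g) (Fm (n, m, f) x)))"

definition Ef_nat ::
  "(nat \<Rightarrow> 'v::ab_group_add set) \<Rightarrow> (ef_mor \<Rightarrow> 'v \<Rightarrow> 'v) \<Rightarrow>
   (nat \<Rightarrow> 'w::ab_group_add set) \<Rightarrow> (ef_mor \<Rightarrow> 'w \<Rightarrow> 'w) \<Rightarrow> (nat \<Rightarrow> 'v \<Rightarrow> 'w) \<Rightarrow> bool" where
  "Ef_nat Fo Fm Go Gm \<eta> \<longleftrightarrow> (\<forall>n. F2lin (Fo n) (Go n) (\<eta> n))
     \<and> (\<forall>n m f. Ef_map n m f \<longrightarrow> (\<forall>x\<in>Fo n. \<eta> m (Fm (n, m, f) x) = Gm (n, m, f) (\<eta> n x)))"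

definition Ef_subfunctor :: "(nat \<Rightarrow> 'v::ab_group_add set) \<Rightarrow> (ef_mor \<Rightarrow> 'v \<Rightarrow> 'v) \<Rightarrow> (nat \<Rightarrow> 'v set) \<Rightarrow> bool" where
  "Ef_subfunctor Fo Fm H \<longleftrightarrow> (\<forall>n. F2sp (H n) \<and> H n \<subseteq> Fo n)
     \<and> (\<forall>n m f. Ef_map n m f \<longrightarrow> Fm (n, m, f) ` H n \<subseteq> H m)"

definition Ef_simple :: "(nat \<Rightarrow> 'v::ab_group_add set) \<Rightarrow> (ef_mor \<Rightarrow> 'v \<Rightarrow> 'v) \<Rightarrow> bool" where
  "Ef_simple Fo Fm \<longleftrightarrow> is_Ffunctor Fo Fm \<and> (\<exists>n. Fo n \<noteq> {0})
     \<and> (\<forall>H. Ef_subfunctor Fo Fm H \<longrightarrow> (\<forall>n. H n = {0}) \<or> (\<forall>n. H n = Fo n))"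

section \<open>Quadratic spaces and the category T_q\<close>

type_synonym qobj = "nat \<times> (vec \<Rightarrow> bit)"

definition bil :: "(vec \<Rightarrow> bit) \<Rightarrow> vec \<Rightarrow> vec \<Rightarrow> bit" where
  "bil q x y = q (x + y) + q x + q y"

definition is_quad :: "nat \<Rightarrow> (vec \<Rightarrow> bit) \<Rightarrow> bool" where
  "is_quad n q \<longleftrightarrow> (\<forall>x\<in>fvec n. \<forall>y\<in>fvec n. \<forall>z\<in>fvec n.
      bil q (x + y) z = bil q x z + bil q y z \<and> bil q x (y + z) = bil q x y + bil q x z)"

definition nondeg :: "nat \<Rightarrow> (vec \<Rightarrow> bit) \<Rightarrow> bool" where
  "nondeg n q \<longleftrightarrow> (\<forall>v\<in>fvec n. (\<forall>w\<in>fvec n. bil q v w = 0) \<longrightarrow> v = 0)"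

definition Tq_obj :: "qobj set" where
  "Tq_obj = {(n, q). is_quad n q \<and> nondeg n q \<and> (\<forall>x. x \<notin> fvec n \<longrightarrow> q x = 0)}"

definition Eq_map :: "qobj \<Rightarrow> qobj \<Rightarrow> (vec \<Rightarrow> vec) \<Rightarrow> bool" where
  "Eq_map V X f \<longleftrightarrow> Ef_map (fst V) (fst X) f \<and> (\<forall>x\<in>fvec (fst V). snd X (f x) = snd V x)"

type_synonym cospan = "qobj \<times> (vec \<Rightarrow> vec) \<times> (vec \<Rightarrow> vec)"

definition cospans :: "qobj \<Rightarrow> qobj \<Rightarrow> cospan set" where
  "cospans V W = {(X, f, g). X \<in> Tq_obj \<and> Eq_map V X f \<and> Eq_map W X g}"

definition cosp_rel :: "qobj \<Rightarrow> qobj \<Rightarrow> (cospan \<times> cospan) set" where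
  "cosp_rel V W = {((X1, f1, g1), (X2, f2, g2)).
      (X1, f1, g1) \<in> cospans V W \<and> (X2, f2, g2) \<in> cospans V W \<and>
      (\<exists>\<alpha>. Eq_map X1 X2 \<alpha> \<and> \<alpha> \<circ> f1 = f2 \<and> \<alpha> \<circ> g1 = g2)}"

definition cosp_eq :: "qobj \<Rightarrow> qobj \<Rightarrow> (cospan \<times> cospan) set" where
  "cosp_eq V W = Restr ((cosp_rel V W \<union> (cosp_rel V W)\<inverse>)\<^sup>*) (cospans V W)"

definition Tq_hom :: "qobj \<Rightarrow> qobj \<Rightarrow> cospan set set" where
  "Tq_hom V W = cospans V W // cosp_eq V W"

definition cls :: "qobj \<Rightarrow> qobj \<Rightarrow> cospan \<Rightarrow> cospan set" where
  "cls V W r = cosp_eq V W `` {r}"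

type_synonym qmor = "qobj \<times> qobj \<times> cospan set"

definition Tq_id :: "qobj \<Rightarrow> qmor" where
  "Tq_id V = (V, V, cls V V (V, fid (fst V), fid (fst V)))"

definition orth :: "qobj \<Rightarrow> (vec \<Rightarrow> vec) \<Rightarrow> qobj \<Rightarrow> vec set" where
  "orth X g W = {x \<in> fvec (fst X). \<forall>w\<in>fvec (fst W). bil (snd X) x (g w) = 0}"

text \<open>(Z, a, b) realises the pseudo push-out of X1 <-g1- W -f2-> X2, i.e.
  Z = W \<perp> W' \<perp> W'' with W' = g1(W)^\<perp> in X1 and W'' = f2(W)^\<perp> in X2.\<close>
definition ppo :: "qobj \<Rightarrow> qobj \<Rightarrow> (vec \<Rightarrow> vec) \<Rightarrow> qobj \<Rightarrow> (vec \<Rightarrow> vec)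
                    \<Rightarrow> qobj \<Rightarrow> (vec \<Rightarrow> vec) \<Rightarrow> (vec \<Rightarrow> vec) \<Rightarrow> bool" where
  "ppo W X1 g1 X2 f2 Z a b \<longleftrightarrow> Z \<in> Tq_obj \<and> Eq_map X1 Z a \<and> Eq_map X2 Z b \<and> a \<circ> g1 = b \<circ> f2
     \<and> (\<forall>z\<in>fvec (fst Z). \<exists>x1\<in>fvec (fst X1). \<exists>x2\<in>fvec (fst X2). z = a x1 + b x2)
     \<and> (\<forall>x1\<in>orth X1 g1 W. \<forall>x2\<in>orth X2 f2 W. bil (snd Z) (a x1) (b x2) = 0)"

definition comp_cls :: "qobj \<Rightarrow> qobj \<Rightarrow> qobj \<Rightarrow> cospan set \<Rightarrow> cospan set \<Rightarrow> cospan set" where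
  "comp_cls V W Y c1 c2 =
     (case (SOME r. r \<in> c1) of (X1, f1, g1) \<Rightarrow>
      case (SOME r. r \<in> c2) of (X2, f2, g2) \<Rightarrow>
      case (SOME (Z, a, b). ppo W X1 g1 X2 f2 Z a b) of (Z, a, b) \<Rightarrow>
        cls V Y (Z, a \<circ> f1, b \<circ> g2))"

definition is_Fquad :: "(qobj \<Rightarrow> 'v::ab_group_add set) \<Rightarrow> (qmor \<Rightarrow> 'v \<Rightarrow> 'v) \<Rightarrow> bool" where
  "is_Fquad Go Gm \<longleftrightarrow> (\<forall>V\<in>Tq_obj. F2sp (Go V))
     \<and> (\<forall>V\<in>Tq_obj. \<forall>W\<in>Tq_obj. \<forall>c\<in>Tq_hom V W. F2lin (Go V) (Go W) (Gm (V, W, c)))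
     \<and> (\<forall>V\<in>Tq_obj. \<forall>x\<in>Go V. Gm (Tq_id V) x = x)
     \<and> (\<forall>V\<in>Tq_obj. \<forall>W\<in>Tq_obj. \<forall>Y\<in>Tq_obj. \<forall>c1\<in>Tq_hom V W. \<forall>c2\<in>Tq_hom W Y. \<forall>x\<in>Go V.
          Gm (V, Y, comp_cls V W Y c1 c2) x = Gm (W, Y, c2) (Gm (V, W, c1) x))"

definition Tq_nat ::
  "(qobj \<Rightarrow> 'v::ab_group_add set) \<Rightarrow> (qmor \<Rightarrow> 'v \<Rightarrow> 'v) \<Rightarrow>
   (qobj \<Rightarrow> 'w::ab_group_add set) \<Rightarrow> (qmor \<Rightarrow> 'w \<Rightarrow> 'w) \<Rightarrow> (qobj \<Rightarrow> 'v \<Rightarrow> 'w) \<Rightarrow> bool" where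
  "Tq_nat Go Gm Ho Hm \<theta> \<longleftrightarrow> (\<forall>V\<in>Tq_obj. F2lin (Go V) (Ho V) (\<theta> V))
     \<and> (\<forall>V\<in>Tq_obj. \<forall>W\<in>Tq_obj. \<forall>c\<in>Tq_hom V W. \<forall>x\<in>Go V.
          \<theta> W (Gm (V, W, c) x) = Hm (V, W, c) (\<theta> V x))"

definition Tq_subfunctor :: "(qobj \<Rightarrow> 'v::ab_group_add set) \<Rightarrow> (qmor \<Rightarrow> 'v \<Rightarrow> 'v) \<Rightarrow> (qobj \<Rightarrow> 'v set) \<Rightarrow> bool" where
  "Tq_subfunctor Go Gm H \<longleftrightarrow> (\<forall>V\<in>Tq_obj. F2sp (H V) \<and> H V \<subseteq> Go V)
     \<and> (\<forall>V\<in>Tq_obj. \<forall>W\<in>Tq_obj. \<forall>c\<in>Tq_hom V W. Gm (V, W, c) ` H V \<subseteq> H W)"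

definition Tq_simple :: "(qobj \<Rightarrow> 'v::ab_group_add set) \<Rightarrow> (qmor \<Rightarrow> 'v \<Rightarrow> 'v) \<Rightarrow> bool" where
  "Tq_simple Go Gm \<longleftrightarrow> is_Fquad Go Gm \<and> (\<exists>V\<in>Tq_obj. Go V \<noteq> {0})
     \<and> (\<forall>H. Tq_subfunctor Go Gm H \<longrightarrow> (\<forall>V\<in>Tq_obj. H V = {0}) \<or> (\<forall>V\<in>Tq_obj. H V = Go V))"

section \<open>The functor epsilon : T_q -> E^f and the precomposition functor iota\<close>

text \<open>For a cospan V -f-> X <-g- W: v |-> g^{-1}(orthogonal projection of f v onto g(W)).\<close>
definition eps_cosp :: "qobj \<Rightarrow> qobj \<Rightarrow> cospan \<Rightarrow> vec \<Rightarrow> vec" where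
  "eps_cosp V W r = (case r of (X, f, g) \<Rightarrow>
     (\<lambda>v. if v \<in> fvec (fst V) then
            (THE w. w \<in> fvec (fst W) \<and> (\<forall>w'\<in>fvec (fst W). bil (snd X) (f v + g w) (g w') = 0))
          else 0))"

definition eps_mor :: "qmor \<Rightarrow> ef_mor" where
  "eps_mor \<phi> = (case \<phi> of (V, W, c) \<Rightarrow> (fst V, fst W, eps_cosp V W (SOME r. r \<in> c)))"

definition iota_ob :: "(nat \<Rightarrow> 'v set) \<Rightarrow> qobj \<Rightarrow> 'v set" where
  "iota_ob Fo = (\<lambda>V. Fo (fst V))"

definition iota_mor :: "(ef_mor \<Rightarrow> 'v \<Rightarrow> 'v) \<Rightarrow> qmor \<Rightarrow> 'v \<Rightarrow> 'v" where
  "iota_mor Fm = (\<lambda>\<phi>. Fm (eps_mor \<phi>))"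

definition iota_nat :: "(nat \<Rightarrow> 'v \<Rightarrow> 'w) \<Rightarrow> qobj \<Rightarrow> 'v \<Rightarrow> 'w" where
  "iota_nat \<eta> = (\<lambda>V. \<eta> (fst V))"

section \<open>Pointwise tensor products\<close>

text \<open>Concrete model of A \<otimes> B: a \<otimes> b is realised as the function
  (phi, psi) |-> phi(a) psi(b) on pairs of linear functionals, and A \<otimes> B as the
  span of these elements.  f \<otimes> g acts by precomposition on the functionals.\<close>

definition tens_el :: "'v::ab_group_add set \<Rightarrow> 'w::ab_group_add set \<Rightarrow> 'v \<Rightarrow> 'w
                        \<Rightarrow> ('v \<Rightarrow> bit) \<times> ('w \<Rightarrow> bit) \<Rightarrow> bit" where
  "tens_el A B a b = (\<lambda>(\<phi>, \<psi>). if F2lin A UNIV \<phi> \<and> F2lin B UNIV \<psi> then \<phi> a * \<psi> b else 0)"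

definition tens_sp :: "'v::ab_group_add set \<Rightarrow> 'w::ab_group_add set
                        \<Rightarrow> (('v \<Rightarrow> bit) \<times> ('w \<Rightarrow> bit) \<Rightarrow> bit) set" where
  "tens_sp A B = \<Inter>{C. F2sp C \<and> {tens_el A B a b | a b. a \<in> A \<and> b \<in> B} \<subseteq> C}"

definition tens_map :: "'v::ab_group_add set \<Rightarrow> 'w::ab_group_add set \<Rightarrow> 'v set \<Rightarrow> 'w set
      \<Rightarrow> ('v \<Rightarrow> 'v) \<Rightarrow> ('w \<Rightarrow> 'w)
      \<Rightarrow> (('v \<Rightarrow> bit) \<times> ('w \<Rightarrow> bit) \<Rightarrow> bit) \<Rightarrow> (('v \<Rightarrow> bit) \<times> ('w \<Rightarrow> bit) \<Rightarrow> bit)" where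
  "tens_map A B A' B' f g t =
     (\<lambda>(\<phi>, \<psi>). if F2lin A' UNIV \<phi> \<and> F2lin B' UNIV \<psi> then t (\<phi> \<circ> f, \<psi> \<circ> g) else 0)"

definition ftens_ob :: "('i \<Rightarrow> 'v::ab_group_add set) \<Rightarrow> ('i \<Rightarrow> 'w::ab_group_add set)
                         \<Rightarrow> 'i \<Rightarrow> (('v \<Rightarrow> bit) \<times> ('w \<Rightarrow> bit) \<Rightarrow> bit) set" where
  "ftens_ob Fo Go = (\<lambda>x. tens_sp (Fo x) (Go x))"

definition ftens_mor :: "('i \<Rightarrow> 'v::ab_group_add set) \<Rightarrow> ('i \<Rightarrow> 'w::ab_group_add set)
     \<Rightarrow> ('i \<times> 'i \<times> 'd \<Rightarrow> 'v \<Rightarrow> 'v) \<Rightarrow> ('i \<times> 'i \<times> 'd \<Rightarrow> 'w \<Rightarrow> 'w)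
     \<Rightarrow> 'i \<times> 'i \<times> 'd \<Rightarrow> (('v \<Rightarrow> bit) \<times> ('w \<Rightarrow> bit) \<Rightarrow> bit) \<Rightarrow> (('v \<Rightarrow> bit) \<times> ('w \<Rightarrow> bit) \<Rightarrow> bit)" where
  "ftens_mor Fo Go Fm Gm = (\<lambda>\<mu>. case \<mu> of (x, y, d) \<Rightarrow>
       tens_map (Fo x) (Go x) (Fo y) (Go y) (Fm \<mu>) (Gm \<mu>))"

end

theory Submission
  imports Defs
begin

declare add_bit_eq_xor[simp del] mult_bit_eq_and[simp del]
lemma bit_cases2: "(x::bit) = 0 \<or> x = 1" by (cases x) simp_all
lemma bit_add_self[simp]: "(x::bit) + x = 0" by (metis bit_2_eq_0 mult_2 mult_zero_left)
lemma vec_add_self[simp]: "(x::vec) + x = 0" by (rule ext) simp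
lemma vec_two[simp]: "(2::vec) = 0" by (rule ext) simp
lemma vec_two_mult[simp]: "2 * (x::vec) = 0" by simp
lemma bit_minus[simp]: "- (x::bit) = x" by (rule minus_unique) simp
lemma bit_diff[simp]: "(x::bit) - y = x + y" by (simp add: diff_conv_add_uminus)
lemma vec_minus[simp]: "- (x::vec) = x" by (rule ext) simp
lemma vec_diff[simp]: "(x::vec) - y = x + y" by (rule ext) simp
lemma vec_add_left_cancel2[simp]: "(x::vec) + (x + y) = y"
  by (simp add: add.assoc[symmetric])
lemma bit_add_left_cancel2[simp]: "(x::bit) + (x + y) = y"
  by (simp add: add.assoc[symmetric])
lemma vec_add_cancel: "(x::vec) + y = z \<longleftrightarrow> x = y + z"
  by (metis add.commute vec_add_left_cancel2)
lemma bit_add_cancel: "(x::bit) + y = z \<longleftrightarrow> x = y + z"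
  by (metis add.commute bit_add_left_cancel2)
lemma fvec_0[simp]: "0 \<in> fvec n" by (simp add: fvec_def)
lemma fvec_add[intro]: "x \<in> fvec n \<Longrightarrow> y \<in> fvec n \<Longrightarrow> x + y \<in> fvec n" by (simp add: fvec_def)
lemma fvec_mono: "x \<in> fvec n \<Longrightarrow> n \<le> m \<Longrightarrow> x \<in> fvec m" by (simp add: fvec_def)
lemma fvec_zero0: "fvec 0 = {0}" by (auto simp: fvec_def)

lemma fvec_finite: "finite (fvec n)"
proof -
  have "fvec n \<subseteq> (\<lambda>S. (\<lambda>i. if i \<in> S then 1 else 0)) ` Pow {..<n}"
  proof
    fix x assume x: "x \<in> fvec n"
    have "x = (\<lambda>i. if i \<in> {i. i < n \<and> x i = 1} then 1 else 0)"
      using x by (auto simp: fvec_def fun_eq_iff)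
    then show "x \<in> (\<lambda>S. (\<lambda>i. if i \<in> S then 1 else 0)) ` Pow {..<n}" by blast
  qed
  then show ?thesis by (rule finite_subset) simp
qed

lemma q_add: "q (x + y) = q x + q y + bil q x y"
  by (simp add: bil_def algebra_simps)
lemma bil_sym: "bil q x y = bil q y x"
  by (simp add: bil_def algebra_simps)

lemma quad_lin1: "is_quad n q \<Longrightarrow> x \<in> fvec n \<Longrightarrow> y \<in> fvec n \<Longrightarrow> z \<in> fvec n \<Longrightarrow>
   bil q (x + y) z = bil q x z + bil q y z" by (simp add: is_quad_def)
lemma quad_lin2: "is_quad n q \<Longrightarrow> x \<in> fvec n \<Longrightarrow> y \<in> fvec n \<Longrightarrow> z \<in> fvec n \<Longrightarrow>
   bil q x (y + z) = bil q x y + bil q x z" by (simp add: is_quad_def)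
lemma quad_bil0: "is_quad n q \<Longrightarrow> z \<in> fvec n \<Longrightarrow> bil q 0 z = 0"
  using quad_lin1[of n q 0 0 z] by simp
lemma quad_bil0': "is_quad n q \<Longrightarrow> z \<in> fvec n \<Longrightarrow> bil q z 0 = 0"
  using quad_bil0 bil_sym by metis
lemma quad_q0: "is_quad n q \<Longrightarrow> q 0 = 0"
  using quad_bil0[of n q 0] by (simp add: bil_def)
lemma bil_self: "is_quad n q \<Longrightarrow> bil q x x = 0"
  using quad_q0 by (simp add: bil_def)

lemma Ef_map_in: "Ef_map n m f \<Longrightarrow> x \<in> fvec n \<Longrightarrow> f x \<in> fvec m" by (simp add: Ef_map_def)
lemma Ef_map_add: "Ef_map n m f \<Longrightarrow> x \<in> fvec n \<Longrightarrow> y \<in> fvec n \<Longrightarrow> f (x + y) = f x + f y"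
  by (simp add: Ef_map_def)
lemma Ef_map_out: "Ef_map n m f \<Longrightarrow> x \<notin> fvec n \<Longrightarrow> f x = 0" by (simp add: Ef_map_def)
lemma Ef_map_0[simp]: "Ef_map n m f \<Longrightarrow> f 0 = 0"
  using Ef_map_add[of n m f 0 0] by simp
lemma Ef_map_comp: "Ef_map n m f \<Longrightarrow> Ef_map m k g \<Longrightarrow> Ef_map n k (g \<circ> f)"
proof -
  assume f: "Ef_map n m f" and g: "Ef_map m k g"
  show ?thesis unfolding Ef_map_def
  proof (intro conjI ballI allI impI)
    fix x assume "x \<in> fvec n" then show "(g \<circ> f) x \<in> fvec k" using f g Ef_map_in by simp
  next
    fix x y assume "x \<in> fvec n" "y \<in> fvec n"
    then show "(g \<circ> f) (x + y) = (g \<circ> f) x + (g \<circ> f) y"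
      using f g Ef_map_in[OF f] Ef_map_add[OF f] Ef_map_add[OF g] by simp
  next
    fix x assume "x \<notin> fvec n" then show "(g \<circ> f) x = 0" using f g Ef_map_out Ef_map_0 by simp
  qed
qed
lemma Ef_map_fid: "Ef_map n n (fid n)" by (auto simp: Ef_map_def fid_def)
lemma fid_comp: "Ef_map n m f \<Longrightarrow> fid m \<circ> f = f"
  by (auto simp: fun_eq_iff fid_def Ef_map_def)
lemma comp_fid: "Ef_map n m f \<Longrightarrow> f \<circ> fid n = f"
  by (auto simp: fun_eq_iff fid_def Ef_map_def)

lemma Eq_map_Ef: "Eq_map V X f \<Longrightarrow> Ef_map (fst V) (fst X) f" by (simp add: Eq_map_def)
lemma Eq_map_q: "Eq_map V X f \<Longrightarrow> x \<in> fvec (fst V) \<Longrightarrow> snd X (f x) = snd V x" by (simp add: Eq_map_def)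
lemma Eq_map_comp: "Eq_map V X f \<Longrightarrow> Eq_map X Y g \<Longrightarrow> Eq_map V Y (g \<circ> f)"
  unfolding Eq_map_def using Ef_map_comp Ef_map_in by (metis comp_apply)
lemma Eq_map_fid: "Eq_map V V (fid (fst V))" using Ef_map_fid by (simp add: Eq_map_def fid_def)
lemma Eq_map_bil: "Eq_map V X f \<Longrightarrow> x \<in> fvec (fst V) \<Longrightarrow> y \<in> fvec (fst V) \<Longrightarrow>
    bil (snd X) (f x) (f y) = bil (snd V) x y"
proof -
  assume f: "Eq_map V X f" and x: "x \<in> fvec (fst V)" and y: "y \<in> fvec (fst V)"
  have "f (x + y) = f x + f y" using Ef_map_add[OF Eq_map_Ef[OF f] x y] .
  then show ?thesis unfolding bil_def using Eq_map_q[OF f] x y fvec_add by metis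
qed


section \<open>Riesz representation\<close>

definition unitv :: "nat \<Rightarrow> vec" where "unitv i = (\<lambda>j. if j = i then 1 else 0)"

definition lin_fun :: "nat \<Rightarrow> (vec \<Rightarrow> bit) \<Rightarrow> bool" where
  "lin_fun m \<phi> \<longleftrightarrow> (\<forall>x\<in>fvec m. \<forall>y\<in>fvec m. \<phi> (x + y) = \<phi> x + \<phi> y)"

lemma unitv_fvec: "i < m \<Longrightarrow> unitv i \<in> fvec m" by (simp add: unitv_def fvec_def)

lemma lin_fun_0: "lin_fun m \<phi> \<Longrightarrow> \<phi> 0 = 0"
  unfolding lin_fun_def using fvec_0 by (metis add_0 bit_add_left_cancel2 add.right_neutral)

lemma lin_fun_agree:
  assumes p: "lin_fun m \<phi>" and q: "lin_fun m \<psi>" and e: "\<forall>i<m. \<phi> (unitv i) = \<psi> (unitv i)"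
  shows "x \<in> fvec m \<Longrightarrow> \<phi> x = \<psi> x"
proof -
  have "\<forall>x. (\<forall>i\<ge>k. x i = 0) \<longrightarrow> k \<le> m \<longrightarrow> \<phi> x = \<psi> x" for k
  proof (induction k)
    case 0
    show ?case
    proof (intro allI impI)
      fix x :: vec assume "\<forall>i\<ge>0. x i = 0"
      then have "x = 0" by (simp add: fun_eq_iff)
      then show "\<phi> x = \<psi> x" using lin_fun_0[OF p] lin_fun_0[OF q] by simp
    qed
  next
    case (Suc k)
    show ?case
    proof (intro allI impI)
      fix x :: vec assume x: "\<forall>i\<ge>Suc k. x i = 0" and km: "Suc k \<le> m"
      define x' where "x' = x(k := 0)"
      have x'0: "\<forall>i\<ge>k. x' i = 0" using x by (auto simp: x'_def)
      have x'f: "x' \<in> fvec m" using x'0 km by (simp add: fvec_def)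
      have IH: "\<phi> x' = \<psi> x'" using Suc.IH x'0 km by simp
      show "\<phi> x = \<psi> x"
      proof (cases "x k = 0")
        case True
        then have "x = x'" by (simp add: x'_def fun_eq_iff)
        then show ?thesis using IH by simp
      next
        case False
        then have "x k = 1" by simp
        then have xx: "x = x' + unitv k" by (simp add: x'_def fun_eq_iff unitv_def)
        have uf: "unitv k \<in> fvec m" using km by (simp add: unitv_fvec)
        have "\<phi> x = \<phi> x' + \<phi> (unitv k)" using p x'f uf xx by (simp add: lin_fun_def)
        moreover have "\<psi> x = \<psi> x' + \<psi> (unitv k)" using q x'f uf xx by (simp add: lin_fun_def)
        ultimately show ?thesis using IH e km by simp
      qed
    qed
  qed
  then show "x \<in> fvec m \<Longrightarrow> \<phi> x = \<psi> x" by (simp add: fvec_def)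
qed

lemma Tq_objD:
  assumes "V \<in> Tq_obj"
  shows "is_quad (fst V) (snd V)" "nondeg (fst V) (snd V)" "\<And>x. x \<notin> fvec (fst V) \<Longrightarrow> snd V x = 0"
  using assms by (auto simp: Tq_obj_def)

lemma Tq_objI:
  "is_quad n q \<Longrightarrow> nondeg n q \<Longrightarrow> (\<And>x. x \<notin> fvec n \<Longrightarrow> q x = 0) \<Longrightarrow> (n, q) \<in> Tq_obj"
  by (auto simp: Tq_obj_def)

lemma nondegD: "nondeg n q \<Longrightarrow> v \<in> fvec n \<Longrightarrow> (\<And>w. w \<in> fvec n \<Longrightarrow> bil q v w = 0) \<Longrightarrow> v = 0"
  by (simp add: nondeg_def)

lemma bil_sum0:
  assumes "is_quad n q" "x \<in> fvec n" "y \<in> fvec n" "z \<in> fvec n"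
  shows "bil q (x + y) z = 0 \<longleftrightarrow> bil q x z = bil q y z"
  using quad_lin1[OF assms] by (metis bit_add_cancel add_0)

lemma nondeg_inj:
  assumes "is_quad n q" "nondeg n q" "x \<in> fvec n" "y \<in> fvec n"
    and "\<And>w. w \<in> fvec n \<Longrightarrow> bil q x w = bil q y w"
  shows "x = y"
proof -
  have "x + y = 0"
    using nondegD[OF assms(2) fvec_add[OF assms(3,4)]] bil_sum0[OF assms(1,3,4)] assms(5) by blast
  then show ?thesis by (simp add: vec_add_cancel)
qed

lemma riesz:
  assumes W: "(m, q) \<in> Tq_obj" and p: "lin_fun m \<phi>"
  shows "\<exists>w\<in>fvec m. \<forall>w'\<in>fvec m. bil q w w' = \<phi> w'"
proof -
  have qq: "is_quad m q" and nd: "nondeg m q" using Tq_objD[OF W] by auto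
  define \<Phi> where "\<Phi> = {\<psi>. lin_fun m \<psi> \<and> (\<forall>x. x \<notin> fvec m \<longrightarrow> \<psi> x = 0)}"
  define L where "L = (\<lambda>w. (\<lambda>w'. if w' \<in> fvec m then bil q w w' else 0))"
  define \<rho> where "\<rho> = (\<lambda>\<psi>::vec\<Rightarrow>bit. (\<lambda>i. if i < m then \<psi> (unitv i) else 0))"
  have inj\<rho>: "inj_on \<rho> \<Phi>"
  proof (rule inj_onI)
    fix \<psi>1 \<psi>2 assume a: "\<psi>1 \<in> \<Phi>" "\<psi>2 \<in> \<Phi>" "\<rho> \<psi>1 = \<rho> \<psi>2"
    have e: "\<forall>i<m. \<psi>1 (unitv i) = \<psi>2 (unitv i)"
    proof (intro allI impI)
      fix i assume "i < m"
      then show "\<psi>1 (unitv i) = \<psi>2 (unitv i)" using fun_cong[OF a(3), of i] by (simp add: \<rho>_def)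
    qed
    show "\<psi>1 = \<psi>2"
    proof
      fix x show "\<psi>1 x = \<psi>2 x"
      proof (cases "x \<in> fvec m")
        case True then show ?thesis using lin_fun_agree[OF _ _ e] a(1,2) by (simp add: \<Phi>_def)
      next
        case False then show ?thesis using a(1,2) by (simp add: \<Phi>_def)
      qed
    qed
  qed
  have \<rho>sub: "\<rho> ` \<Phi> \<subseteq> fvec m" by (auto simp: \<rho>_def fvec_def)
  have finPhi: "finite \<Phi>" using finite_imageD[OF finite_subset[OF \<rho>sub fvec_finite] inj\<rho>] .
  have card1: "card \<Phi> \<le> card (fvec m)" using card_inj_on_le[OF inj\<rho> _ fvec_finite] \<rho>sub by blast
  have Lsub: "L ` fvec m \<subseteq> \<Phi>"
  proof
    fix \<psi> assume "\<psi> \<in> L ` fvec m"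
    then obtain w where w: "w \<in> fvec m" "\<psi> = L w" by blast
    have "lin_fun m \<psi>" unfolding lin_fun_def w(2) L_def
      using quad_lin2[OF qq w(1)] fvec_add by simp
    then show "\<psi> \<in> \<Phi>" using w by (simp add: \<Phi>_def L_def)
  qed
  have injL: "inj_on L (fvec m)"
  proof (rule inj_onI)
    fix w1 w2 assume a: "w1 \<in> fvec m" "w2 \<in> fvec m" "L w1 = L w2"
    show "w1 = w2"
    proof (rule nondeg_inj[OF qq nd a(1,2)])
      fix w assume "w \<in> fvec m"
      then show "bil q w1 w = bil q w2 w" using fun_cong[OF a(3), of w] by (simp add: L_def)
    qed
  qed
  have "card (L ` fvec m) = card (fvec m)" using card_image[OF injL] .
  then have eq: "L ` fvec m = \<Phi>" using card_seteq[OF finPhi Lsub] card1 by simp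
  define \<psi>0 where "\<psi>0 = (\<lambda>w'. if w' \<in> fvec m then \<phi> w' else 0)"
  have "\<psi>0 \<in> \<Phi>" using p fvec_add by (simp add: \<Phi>_def \<psi>0_def lin_fun_def)
  then obtain w where w: "w \<in> fvec m" "L w = \<psi>0" using eq by blast
  show ?thesis
  proof (intro bexI[OF _ w(1)] ballI)
    fix w' assume "w' \<in> fvec m"
    then show "bil q w w' = \<phi> w'" using fun_cong[OF w(2), of w'] by (simp add: L_def \<psi>0_def)
  qed
qed

section \<open>Orthogonal projection and epsilon\<close>

lemma bil_emb:
  assumes X: "is_quad (fst X) (snd X)" and g: "Eq_map W X g"
    and x: "x \<in> fvec (fst X)" and w: "w \<in> fvec (fst W)" and w': "w' \<in> fvec (fst W)"
  shows "bil (snd X) (x + g w) (g w') = bil (snd X) x (g w') + bil (snd W) w w'"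
proof -
  have gw: "g w \<in> fvec (fst X)" "g w' \<in> fvec (fst X)" using Ef_map_in[OF Eq_map_Ef[OF g]] w w' by auto
  show ?thesis using quad_lin1[OF X x gw] Eq_map_bil[OF g w w'] by simp
qed

lemma proj_ex:
  assumes W: "W \<in> Tq_obj" and X: "is_quad (fst X) (snd X)" and g: "Eq_map W X g"
    and x: "x \<in> fvec (fst X)"
  shows "\<exists>!w. w \<in> fvec (fst W) \<and> (\<forall>w'\<in>fvec (fst W). bil (snd X) (x + g w) (g w') = 0)"
proof -
  have WW: "(fst W, snd W) \<in> Tq_obj" using W by simp
  have Wq: "is_quad (fst W) (snd W)" and Wn: "nondeg (fst W) (snd W)" using Tq_objD[OF W] by auto
  have gin: "\<And>w. w \<in> fvec (fst W) \<Longrightarrow> g w \<in> fvec (fst X)" using Ef_map_in[OF Eq_map_Ef[OF g]] by auto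
  have lf: "lin_fun (fst W) (\<lambda>w'. bil (snd X) x (g w'))"
    unfolding lin_fun_def
  proof (intro ballI)
    fix a b assume a: "a \<in> fvec (fst W)" and b: "b \<in> fvec (fst W)"
    have "g (a + b) = g a + g b" using Ef_map_add[OF Eq_map_Ef[OF g] a b] .
    then show "bil (snd X) x (g (a + b)) = bil (snd X) x (g a) + bil (snd X) x (g b)"
      using quad_lin2[OF X x gin[OF a] gin[OF b]] by simp
  qed
  obtain w where w: "w \<in> fvec (fst W)" and wp: "\<forall>w'\<in>fvec (fst W). bil (snd W) w w' = bil (snd X) x (g w')"
    using riesz[OF WW lf] by blast
  show ?thesis
  proof (rule ex1I[of _ w])
    show "w \<in> fvec (fst W) \<and> (\<forall>w'\<in>fvec (fst W). bil (snd X) (x + g w) (g w') = 0)"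
      using w wp bil_emb[OF X g x w] by simp
  next
    fix w2 assume a: "w2 \<in> fvec (fst W) \<and> (\<forall>w'\<in>fvec (fst W). bil (snd X) (x + g w2) (g w') = 0)"
    show "w2 = w"
    proof (rule nondeg_inj[OF Wq Wn])
      show "w2 \<in> fvec (fst W)" "w \<in> fvec (fst W)" using a w by auto
    next
      fix w' assume w': "w' \<in> fvec (fst W)"
      have "bil (snd X) x (g w') + bil (snd W) w2 w' = 0" using a bil_emb[OF X g x _ w'] w' by auto
      then show "bil (snd W) w2 w' = bil (snd W) w w'" using wp w' by (simp add: bit_add_cancel)
    qed
  qed
qed

lemma cospansD:
  assumes "(X, f, g) \<in> cospans V W"
  shows "X \<in> Tq_obj" "Eq_map V X f" "Eq_map W X g"
  using assms by (auto simp: cospans_def)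

definition pcond :: "qobj \<Rightarrow> qobj \<Rightarrow> (vec \<Rightarrow> vec) \<Rightarrow> vec \<Rightarrow> vec \<Rightarrow> bool" where
  "pcond W X g x w \<longleftrightarrow> w \<in> fvec (fst W) \<and> (\<forall>w'\<in>fvec (fst W). bil (snd X) (x + g w) (g w') = 0)"

lemma eps_cosp_apply:
  "v \<in> fvec (fst V) \<Longrightarrow> eps_cosp V W (X, f, g) v = (THE w. pcond W X g (f v) w)"
  by (simp add: eps_cosp_def pcond_def)

lemma eps_cosp_out: "v \<notin> fvec (fst V) \<Longrightarrow> eps_cosp V W (X, f, g) v = 0"
  by (simp add: eps_cosp_def)

lemma eps_cosp_prop:
  assumes W: "W \<in> Tq_obj" and r: "(X, f, g) \<in> cospans V W" and v: "v \<in> fvec (fst V)"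
  shows "pcond W X g (f v) (eps_cosp V W (X, f, g) v)"
proof -
  have X: "is_quad (fst X) (snd X)" using Tq_objD(1)[OF cospansD(1)[OF r]] .
  have fv: "f v \<in> fvec (fst X)" using Ef_map_in[OF Eq_map_Ef[OF cospansD(2)[OF r]] v] .
  have "\<exists>!w. pcond W X g (f v) w" using proj_ex[OF W X cospansD(3)[OF r] fv] by (simp add: pcond_def)
  then show ?thesis unfolding eps_cosp_apply[OF v] by (rule theI')
qed

lemma eps_cosp_unique:
  assumes W: "W \<in> Tq_obj" and r: "(X, f, g) \<in> cospans V W" and v: "v \<in> fvec (fst V)"
    and w: "pcond W X g (f v) w"
  shows "eps_cosp V W (X, f, g) v = w"
proof -
  have X: "is_quad (fst X) (snd X)" using Tq_objD(1)[OF cospansD(1)[OF r]] .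
  have fv: "f v \<in> fvec (fst X)" using Ef_map_in[OF Eq_map_Ef[OF cospansD(2)[OF r]] v] .
  have "\<exists>!w. pcond W X g (f v) w" using proj_ex[OF W X cospansD(3)[OF r] fv] by (simp add: pcond_def)
  then show ?thesis unfolding eps_cosp_apply[OF v] using the1_equality[where P="pcond W X g (f v)"] w by blast
qed

lemma eps_cosp_Ef:
  assumes W: "W \<in> Tq_obj" and r: "(X, f, g) \<in> cospans V W"
  shows "Ef_map (fst V) (fst W) (eps_cosp V W (X, f, g))"
  unfolding Ef_map_def
proof (intro conjI ballI allI impI)
  fix v assume "v \<in> fvec (fst V)"
  then show "eps_cosp V W (X, f, g) v \<in> fvec (fst W)" using eps_cosp_prop[OF W r] by (simp add: pcond_def)
next
  fix v assume "v \<notin> fvec (fst V)" then show "eps_cosp V W (X, f, g) v = 0" by (rule eps_cosp_out)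
next
  fix v1 v2 assume v1: "v1 \<in> fvec (fst V)" and v2: "v2 \<in> fvec (fst V)"
  have X: "is_quad (fst X) (snd X)" using Tq_objD(1)[OF cospansD(1)[OF r]] .
  have f: "Ef_map (fst V) (fst X) f" and g: "Ef_map (fst W) (fst X) g"
    using Eq_map_Ef cospansD[OF r] by auto
  define w1 where "w1 = eps_cosp V W (X, f, g) v1"
  define w2 where "w2 = eps_cosp V W (X, f, g) v2"
  have p1: "pcond W X g (f v1) w1" using eps_cosp_prop[OF W r v1] by (simp add: w1_def)
  have p2: "pcond W X g (f v2) w2" using eps_cosp_prop[OF W r v2] by (simp add: w2_def)
  have w1f: "w1 \<in> fvec (fst W)" and w2f: "w2 \<in> fvec (fst W)" using p1 p2 by (auto simp: pcond_def)
  have "pcond W X g (f (v1 + v2)) (w1 + w2)"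
    unfolding pcond_def
  proof (intro conjI ballI)
    show "w1 + w2 \<in> fvec (fst W)" using w1f w2f by auto
  next
    fix w' assume w': "w' \<in> fvec (fst W)"
    have e: "f (v1 + v2) + g (w1 + w2) = (f v1 + g w1) + (f v2 + g w2)"
      using Ef_map_add[OF f v1 v2] Ef_map_add[OF g w1f w2f] by (simp add: algebra_simps)
    have i1: "f v1 + g w1 \<in> fvec (fst X)" using Ef_map_in[OF f v1] Ef_map_in[OF g w1f] by auto
    have i2: "f v2 + g w2 \<in> fvec (fst X)" using Ef_map_in[OF f v2] Ef_map_in[OF g w2f] by auto
    have i3: "g w' \<in> fvec (fst X)" using Ef_map_in[OF g w'] .
    show "bil (snd X) (f (v1 + v2) + g (w1 + w2)) (g w') = 0"
      unfolding e quad_lin1[OF X i1 i2 i3] using p1 p2 w' by (simp add: pcond_def)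
  qed
  then show "eps_cosp V W (X, f, g) (v1 + v2) = eps_cosp V W (X, f, g) v1 + eps_cosp V W (X, f, g) v2"
    using eps_cosp_unique[OF W r fvec_add[OF v1 v2]] by (simp add: w1_def w2_def)
qed

lemma eps_cosp_rel:
  assumes W: "W \<in> Tq_obj" and rel: "((X1, f1, g1), (X2, f2, g2)) \<in> cosp_rel V W"
  shows "eps_cosp V W (X1, f1, g1) = eps_cosp V W (X2, f2, g2)"
proof
  fix v
  have r1: "(X1, f1, g1) \<in> cospans V W" and r2: "(X2, f2, g2) \<in> cospans V W"
    using rel by (auto simp: cosp_rel_def)
  obtain \<alpha> where a: "Eq_map X1 X2 \<alpha>" "\<alpha> \<circ> f1 = f2" "\<alpha> \<circ> g1 = g2" using rel by (auto simp: cosp_rel_def)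
  show "eps_cosp V W (X1, f1, g1) v = eps_cosp V W (X2, f2, g2) v"
  proof (cases "v \<in> fvec (fst V)")
    case False then show ?thesis by (simp add: eps_cosp_out)
  next
    case v: True
    define w where "w = eps_cosp V W (X1, f1, g1) v"
    have p: "pcond W X1 g1 (f1 v) w" using eps_cosp_prop[OF W r1 v] by (simp add: w_def)
    have wf: "w \<in> fvec (fst W)" using p by (simp add: pcond_def)
    have f1: "Ef_map (fst V) (fst X1) f1" and g1: "Ef_map (fst W) (fst X1) g1"
      using Eq_map_Ef cospansD[OF r1] by auto
    have "pcond W X2 g2 (f2 v) w"
      unfolding pcond_def
    proof (intro conjI ballI)
      show "w \<in> fvec (fst W)" by (rule wf)
    next
      fix w' assume w': "w' \<in> fvec (fst W)"
      have i1: "f1 v + g1 w \<in> fvec (fst X1)" using Ef_map_in[OF f1 v] Ef_map_in[OF g1 wf] by auto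
      have i2: "g1 w' \<in> fvec (fst X1)" using Ef_map_in[OF g1 w'] .
      have "\<alpha> (f1 v + g1 w) = f2 v + g2 w"
        using Ef_map_add[OF Eq_map_Ef[OF a(1)] Ef_map_in[OF f1 v] Ef_map_in[OF g1 wf]] a(2,3)
        by (auto simp: fun_eq_iff)
      moreover have "\<alpha> (g1 w') = g2 w'" using a(3) by (auto simp: fun_eq_iff)
      ultimately show "bil (snd X2) (f2 v + g2 w) (g2 w') = 0"
        using Eq_map_bil[OF a(1) i1 i2] p w' by (simp add: pcond_def)
    qed
    then show ?thesis using eps_cosp_unique[OF W r2 v] by (simp add: w_def)
  qed
qed

lemma eps_cosp_rel': "W \<in> Tq_obj \<Longrightarrow> (r1, r2) \<in> cosp_rel V W \<Longrightarrow> eps_cosp V W r1 = eps_cosp V W r2"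
  using eps_cosp_rel by (cases r1, cases r2) blast

lemma eps_cosp_eq:
  assumes W: "W \<in> Tq_obj" and e: "(r1, r2) \<in> cosp_eq V W"
  shows "eps_cosp V W r1 = eps_cosp V W r2"
proof -
  have "(r1, r2) \<in> (cosp_rel V W \<union> (cosp_rel V W)\<inverse>)\<^sup>*" using e by (simp add: cosp_eq_def)
  then show ?thesis
  proof (induction rule: rtrancl_induct)
    case base then show ?case by simp
  next
    case (step y z)
    then show ?case using eps_cosp_rel'[OF W, of y z V] eps_cosp_rel'[OF W, of z y V] by auto
  qed
qed

lemma cosp_eq_equiv: "equiv (cospans V W) (cosp_eq V W)"
proof (rule equivI)
  show "refl_on (cospans V W) (cosp_eq V W)" by (rule refl_onI) (auto simp: cosp_eq_def)
next
  show "sym (cosp_eq V W)"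
  proof (rule symI)
    fix a b assume "(a, b) \<in> cosp_eq V W"
    then have "(a, b) \<in> (cosp_rel V W \<union> (cosp_rel V W)\<inverse>)\<^sup>*" "a \<in> cospans V W" "b \<in> cospans V W"
      by (auto simp: cosp_eq_def)
    moreover have "(b, a) \<in> (cosp_rel V W \<union> (cosp_rel V W)\<inverse>)\<^sup>*"
    proof -
      have "sym ((cosp_rel V W \<union> (cosp_rel V W)\<inverse>)\<^sup>*)" by (rule sym_rtrancl) (rule sym_Un_converse)
      then show ?thesis using calculation(1) by (rule symD)
    qed
    ultimately show "(b, a) \<in> cosp_eq V W" by (auto simp: cosp_eq_def)
  qed
next
  show "trans (cosp_eq V W)" unfolding cosp_eq_def by (rule trans_Restr) (rule trans_rtrancl)
next
  show "cosp_eq V W \<subseteq> cospans V W \<times> cospans V W" by (auto simp: cosp_eq_def)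
qed

lemma cls_hom: "r \<in> cospans V W \<Longrightarrow> cls V W r \<in> Tq_hom V W"
  by (simp add: cls_def Tq_hom_def quotientI)

lemma cls_self: "r \<in> cospans V W \<Longrightarrow> r \<in> cls V W r"
  by (simp add: cls_def cosp_eq_def)

lemma hom_ne: "c \<in> Tq_hom V W \<Longrightarrow> \<exists>r. r \<in> c"
  unfolding Tq_hom_def using cosp_eq_equiv in_quotient_imp_non_empty by blast

lemma hom_cospans: "c \<in> Tq_hom V W \<Longrightarrow> r \<in> c \<Longrightarrow> r \<in> cospans V W"
  unfolding Tq_hom_def using cosp_eq_equiv in_quotient_imp_subset by blast

lemma hom_eps:
  assumes W: "W \<in> Tq_obj" and c: "c \<in> Tq_hom V W" and r: "r \<in> c" and r': "r' \<in> c"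
  shows "eps_cosp V W r = eps_cosp V W r'"
proof -
  have "(r, r') \<in> cosp_eq V W"
    using c r r' cosp_eq_equiv unfolding Tq_hom_def by (meson quotient_eq_iff)
  then show ?thesis using eps_cosp_eq[OF W] by blast
qed

lemma eps_mor_eq:
  assumes W: "W \<in> Tq_obj" and c: "c \<in> Tq_hom V W" and r: "r \<in> c"
  shows "eps_mor (V, W, c) = (fst V, fst W, eps_cosp V W r)"
proof -
  have "(SOME r. r \<in> c) \<in> c" using hom_ne[OF c] by (metis someI_ex)
  then show ?thesis using hom_eps[OF W c _ r] by (simp add: eps_mor_def)
qed

lemma eps_cosp_Ef': "W \<in> Tq_obj \<Longrightarrow> r \<in> cospans V W \<Longrightarrow> Ef_map (fst V) (fst W) (eps_cosp V W r)"
  using eps_cosp_Ef by (cases r) auto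

lemma eps_mor_Ef:
  assumes W: "W \<in> Tq_obj" and c: "c \<in> Tq_hom V W"
  obtains h where "eps_mor (V, W, c) = (fst V, fst W, h)" "Ef_map (fst V) (fst W) h"
proof -
  obtain r where r: "r \<in> c" using hom_ne[OF c] by blast
  show ?thesis using that eps_mor_eq[OF W c r] eps_cosp_Ef'[OF W hom_cospans[OF c r]] by blast
qed

section \<open>Orthogonal sums\<close>

definition lo :: "nat \<Rightarrow> vec \<Rightarrow> vec" where "lo n z = (\<lambda>i. if i < n then z i else 0)"
definition hi :: "nat \<Rightarrow> vec \<Rightarrow> vec" where "hi n z = (\<lambda>i. z (i + n))"
definition shr :: "nat \<Rightarrow> vec \<Rightarrow> vec" where "shr n y = (\<lambda>i. if n \<le> i then y (i - n) else 0)"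

lemma lo_add: "lo n (x + y) = lo n x + lo n y" by (simp add: lo_def fun_eq_iff)
lemma hi_add: "hi n (x + y) = hi n x + hi n y" by (simp add: hi_def fun_eq_iff)
lemma shr_add: "shr n (x + y) = shr n x + shr n y" by (simp add: shr_def fun_eq_iff)
lemma shr_0[simp]: "shr n 0 = 0" by (simp add: shr_def fun_eq_iff)
lemma lo_fvec: "lo n z \<in> fvec n" by (simp add: lo_def fvec_def)
lemma hi_fvec: "z \<in> fvec (n + m) \<Longrightarrow> hi n z \<in> fvec m" by (simp add: hi_def fvec_def)
lemma shr_fvec: "y \<in> fvec m \<Longrightarrow> shr n y \<in> fvec (n + m)" by (simp add: shr_def fvec_def)
lemma lo_hi: "lo n z + shr n (hi n z) = z"
  by (simp add: lo_def hi_def shr_def fun_eq_iff)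
lemma lo_id: "x \<in> fvec n \<Longrightarrow> lo n x = x" by (auto simp: lo_def fvec_def fun_eq_iff)
lemma hi_0: "x \<in> fvec n \<Longrightarrow> hi n x = 0" by (auto simp: hi_def fvec_def fun_eq_iff)
lemma lo_shr: "lo n (shr n y) = 0" by (simp add: lo_def shr_def fun_eq_iff)
lemma hi_shr: "hi n (shr n y) = y" by (simp add: hi_def shr_def fun_eq_iff)
lemma shr_inj: "shr n y = shr n y' \<Longrightarrow> y = y'" by (metis hi_shr)

definition osum :: "qobj \<Rightarrow> qobj \<Rightarrow> qobj" where
  "osum V W = (fst V + fst W, \<lambda>z. if z \<in> fvec (fst V + fst W)
       then snd V (lo (fst V) z) + snd W (hi (fst V) z) else 0)"

lemma fst_osum[simp]: "fst (osum V W) = fst V + fst W" by (simp add: osum_def)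

lemma osum_q:
  assumes "x \<in> fvec (fst V)" "y \<in> fvec (fst W)"
  shows "snd (osum V W) (x + shr (fst V) y) = snd V x + snd W y"
proof -
  have "x + shr (fst V) y \<in> fvec (fst V + fst W)"
    using fvec_mono[OF assms(1), of "fst V + fst W"] shr_fvec[OF assms(2)] by auto
  then show ?thesis using assms by (simp add: osum_def lo_add hi_add lo_id hi_0 lo_shr hi_shr)
qed

lemma osum_bil:
  assumes "x \<in> fvec (fst V)" "y \<in> fvec (fst W)" "x' \<in> fvec (fst V)" "y' \<in> fvec (fst W)"
  shows "bil (snd (osum V W)) (x + shr (fst V) y) (x' + shr (fst V) y') = bil (snd V) x x' + bil (snd W) y y'"
proof -
  have e: "x + shr (fst V) y + (x' + shr (fst V) y') = (x + x') + shr (fst V) (y + y')"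
    by (simp add: shr_add algebra_simps)
  have 1: "snd (osum V W) ((x + x') + shr (fst V) (y + y')) = snd V (x + x') + snd W (y + y')"
    using assms by (simp add: osum_q fvec_add)
  have 2: "snd (osum V W) (x + shr (fst V) y) = snd V x + snd W y" using assms by (simp add: osum_q)
  have 3: "snd (osum V W) (x' + shr (fst V) y') = snd V x' + snd W y'" using assms by (simp add: osum_q)
  show ?thesis unfolding bil_def e 1 2 3 by (simp add: ac_simps)
qed

lemma osum_decomp: "z \<in> fvec (fst V + fst W) \<Longrightarrow>
   \<exists>x y. x \<in> fvec (fst V) \<and> y \<in> fvec (fst W) \<and> z = x + shr (fst V) y"
  using lo_hi lo_fvec hi_fvec by metis

lemma osum_obj:
  assumes V: "V \<in> Tq_obj" and W: "W \<in> Tq_obj"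
  shows "osum V W \<in> Tq_obj"
proof -
  obtain n q where Vnq: "V = (n, q)" by (cases V)
  obtain m r where Wmr: "W = (m, r)" by (cases W)
  have Vq: "is_quad n q" "nondeg n q" and Wq: "is_quad m r" "nondeg m r"
    using Tq_objD[OF V] Tq_objD[OF W] Vnq Wmr by auto
  let ?Q = "snd (osum V W)"
  have bb: "bil ?Q (x + shr n y) (x' + shr n y') = bil q x x' + bil r y y'"
    if "x \<in> fvec n" "y \<in> fvec m" "x' \<in> fvec n" "y' \<in> fvec m" for x y x' y'
    using osum_bil[of x V y W x' y'] that Vnq Wmr by simp
  have dec: "\<exists>x y. x \<in> fvec n \<and> y \<in> fvec m \<and> z = x + shr n y" if "z \<in> fvec (n + m)" for z
    using osum_decomp[of z V W] that Vnq Wmr by simp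
  have quad: "is_quad (n + m) ?Q"
    unfolding is_quad_def
  proof (intro ballI conjI)
    fix a b c assume a: "a \<in> fvec (n + m)" and b: "b \<in> fvec (n + m)" and c: "c \<in> fvec (n + m)"
    obtain a1 a2 where A: "a1 \<in> fvec n" "a2 \<in> fvec m" "a = a1 + shr n a2" using dec[OF a] by blast
    obtain b1 b2 where B: "b1 \<in> fvec n" "b2 \<in> fvec m" "b = b1 + shr n b2" using dec[OF b] by blast
    obtain c1 c2 where C: "c1 \<in> fvec n" "c2 \<in> fvec m" "c = c1 + shr n c2" using dec[OF c] by blast
    have ab: "a + b = (a1 + b1) + shr n (a2 + b2)" using A B by (simp add: shr_add algebra_simps)
    have bc: "b + c = (b1 + c1) + shr n (b2 + c2)" using B C by (simp add: shr_add algebra_simps)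
    show "bil ?Q (a + b) c = bil ?Q a c + bil ?Q b c"
      unfolding ab unfolding A(3) B(3) C(3) bb[OF fvec_add[OF A(1) B(1)] fvec_add[OF A(2) B(2)] C(1,2)]
        bb[OF A(1,2) C(1,2)] bb[OF B(1,2) C(1,2)]
        quad_lin1[OF Vq(1) A(1) B(1) C(1)] quad_lin1[OF Wq(1) A(2) B(2) C(2)]
      by (simp add: ac_simps)
    show "bil ?Q a (b + c) = bil ?Q a b + bil ?Q a c"
      unfolding bc unfolding A(3) B(3) C(3) bb[OF A(1,2) fvec_add[OF B(1) C(1)] fvec_add[OF B(2) C(2)]]
        bb[OF A(1,2) C(1,2)] bb[OF A(1,2) B(1,2)]
        quad_lin2[OF Vq(1) A(1) B(1) C(1)] quad_lin2[OF Wq(1) A(2) B(2) C(2)]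
      by (simp add: ac_simps)
  qed
  have nd: "nondeg (n + m) ?Q"
    unfolding nondeg_def
  proof (intro ballI impI)
    fix v assume v: "v \<in> fvec (n + m)" and o: "\<forall>w\<in>fvec (n + m). bil ?Q v w = 0"
    obtain v1 v2 where A: "v1 \<in> fvec n" "v2 \<in> fvec m" "v = v1 + shr n v2" using dec[OF v] by blast
    have "v1 = 0"
    proof (rule nondegD[OF Vq(2) A(1)])
      fix w assume w: "w \<in> fvec n"
      have "w + shr n 0 \<in> fvec (n + m)" using fvec_mono[OF w] by simp
      then have "bil ?Q v (w + shr n 0) = 0" using o by blast
      then show "bil q v1 w = 0" using bb[OF A(1,2) w fvec_0] A(3) quad_bil0'[OF Wq(1) A(2)] by simp
    qed
    moreover have "v2 = 0"
    proof (rule nondegD[OF Wq(2) A(2)])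
      fix w assume w: "w \<in> fvec m"
      have "0 + shr n w \<in> fvec (n + m)" using shr_fvec[OF w] by simp
      then have "bil ?Q v (0 + shr n w) = 0" using o by blast
      then show "bil r v2 w = 0" using bb[OF A(1,2) fvec_0 w] A(3) quad_bil0'[OF Vq(1) A(1)] by simp
    qed
    ultimately show "v = 0" using A(3) by simp
  qed
  have "osum V W = (n + m, ?Q)" using Vnq Wmr by (simp add: osum_def)
  moreover have "(n + m, ?Q) \<in> Tq_obj"
    by (rule Tq_objI[OF quad nd]) (simp add: osum_def Vnq Wmr)
  ultimately show ?thesis by simp
qed

definition inr :: "qobj \<Rightarrow> qobj \<Rightarrow> vec \<Rightarrow> vec" where
  "inr V W = (\<lambda>y. if y \<in> fvec (fst W) then shr (fst V) y else 0)"

lemma Eq_map_inl: "W \<in> Tq_obj \<Longrightarrow> Eq_map V (osum V W) (fid (fst V))"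
  unfolding Eq_map_def Ef_map_def
proof (intro conjI ballI allI impI)
  fix x assume x: "x \<in> fvec (fst V)"
  show "fid (fst V) x \<in> fvec (fst (osum V W))" using x fvec_mono[OF x] by (simp add: fid_def)
  assume W: "W \<in> Tq_obj"
  show "snd (osum V W) (fid (fst V) x) = snd V x" using osum_q[OF x fvec_0, of W] x quad_q0[OF Tq_objD(1)[OF W]] by (simp add: fid_def)
next
  fix x y assume "x \<in> fvec (fst V)" "y \<in> fvec (fst V)"
  then show "fid (fst V) (x + y) = fid (fst V) x + fid (fst V) y" by (simp add: fid_def fvec_add)
qed (simp add: fid_def)

lemma Eq_map_inr: "V \<in> Tq_obj \<Longrightarrow> Eq_map W (osum V W) (inr V W)"
  unfolding Eq_map_def Ef_map_def
proof (intro conjI ballI allI impI)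
  fix x assume x: "x \<in> fvec (fst W)"
  show "inr V W x \<in> fvec (fst (osum V W))" using x shr_fvec[OF x] by (simp add: inr_def)
  assume V: "V \<in> Tq_obj"
  show "snd (osum V W) (inr V W x) = snd W x" using osum_q[OF fvec_0 x, of V] x quad_q0[OF Tq_objD(1)[OF V]] by (simp add: inr_def)
next
  fix x y assume "x \<in> fvec (fst W)" "y \<in> fvec (fst W)"
  then show "inr V W (x + y) = inr V W x + inr V W y" by (simp add: inr_def fvec_add shr_add)
qed (simp add: inr_def)

section \<open>Epsilon is full\<close>

lemma eps_full:
  assumes V: "V \<in> Tq_obj" and W: "W \<in> Tq_obj" and h: "Ef_map (fst V) (fst W) h"
  shows "\<exists>c\<in>Tq_hom V W. eps_mor (V, W, c) = (fst V, fst W, h)"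
proof -
  define U where "U = osum V W"
  define X where "X = osum W U"
  define f where "f = (\<lambda>v. if v \<in> fvec (fst V) then h v + shr (fst W) (v + shr (fst V) (h v)) else 0)"
  define g where "g = fid (fst W)"
  have U: "U \<in> Tq_obj" using osum_obj[OF V W] by (simp add: U_def)
  have X: "X \<in> Tq_obj" using osum_obj[OF W U] by (simp add: X_def)
  have fU: "fst U = fst V + fst W" by (simp add: U_def)
  have fX: "fst X = fst W + fst U" by (simp add: X_def)
  have hin: "v \<in> fvec (fst V) \<Longrightarrow> h v \<in> fvec (fst W)" for v using Ef_map_in[OF h] by simp
  have yin: "v \<in> fvec (fst V) \<Longrightarrow> v + shr (fst V) (h v) \<in> fvec (fst U)" for v
    unfolding fU using fvec_mono[of v "fst V" "fst V + fst W"] shr_fvec[OF hin] by auto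
  have g: "Eq_map W X g" using Eq_map_inl[OF U] by (simp add: X_def g_def)
  have f: "Eq_map V X f"
    unfolding Eq_map_def Ef_map_def
  proof (intro conjI ballI allI impI)
    fix v assume v: "v \<in> fvec (fst V)"
    have a1: "h v \<in> fvec (fst X)" unfolding fX using fvec_mono[OF hin[OF v], of "fst W + fst U"] by simp
    have a2: "shr (fst W) (v + shr (fst V) (h v)) \<in> fvec (fst X)" unfolding fX using shr_fvec[OF yin[OF v]] .
    show "f v \<in> fvec (fst X)" using v a1 a2 by (simp add: f_def fvec_add)
    have "snd X (f v) = snd W (h v) + snd U (v + shr (fst V) (h v))"
      using osum_q[OF hin[OF v] yin[OF v]] v by (simp add: X_def f_def)
    also have "\<dots> = snd W (h v) + (snd V v + snd W (h v))"
      using osum_q[OF v hin[OF v]] by (simp add: U_def)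
    also have "\<dots> = snd V v" by (simp add: ac_simps)
    finally show "snd X (f v) = snd V v" .
  next
    fix v1 v2 assume v1: "v1 \<in> fvec (fst V)" and v2: "v2 \<in> fvec (fst V)"
    have hh: "h (v1 + v2) = h v1 + h v2" using Ef_map_add[OF h v1 v2] .
    have "f (v1 + v2) = h (v1 + v2) + shr (fst W) ((v1 + v2) + shr (fst V) (h (v1 + v2)))"
      using fvec_add[OF v1 v2] by (simp add: f_def)
    also have "\<dots> = (h v1 + shr (fst W) (v1 + shr (fst V) (h v1))) + (h v2 + shr (fst W) (v2 + shr (fst V) (h v2)))"
      unfolding hh shr_add by (simp only: ac_simps)
    also have "\<dots> = f v1 + f v2" using v1 v2 by (simp add: f_def)
    finally show "f (v1 + v2) = f v1 + f v2" .
  next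
    fix v assume "v \<notin> fvec (fst V)" then show "f v = 0" by (simp add: f_def)
  qed
  have r: "(X, f, g) \<in> cospans V W" using X f g by (simp add: cospans_def)
  have e: "eps_cosp V W (X, f, g) = h"
  proof
    fix v show "eps_cosp V W (X, f, g) v = h v"
    proof (cases "v \<in> fvec (fst V)")
      case False then show ?thesis using eps_cosp_out Ef_map_out[OF h] by simp
    next
      case True
      have "pcond W X g (f v) (h v)"
        unfolding pcond_def
      proof (intro conjI ballI)
        show "h v \<in> fvec (fst W)" using hin[OF True] .
      next
        fix w' assume w': "w' \<in> fvec (fst W)"
        have fg: "f v + g (h v) = 0 + shr (fst W) (v + shr (fst V) (h v))"
          using True hin[OF True] by (simp add: f_def g_def fid_def)
        have gw: "g w' = w' + shr (fst W) 0" using w' by (simp add: g_def fid_def)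
        have "bil (snd X) (0 + shr (fst W) (v + shr (fst V) (h v))) (w' + shr (fst W) 0)
             = bil (snd W) 0 w' + bil (snd U) (v + shr (fst V) (h v)) 0"
          unfolding X_def by (rule osum_bil[OF fvec_0 yin[OF True] w' fvec_0])
        also have "\<dots> = 0" using quad_bil0[OF Tq_objD(1)[OF W] w'] quad_bil0'[OF Tq_objD(1)[OF U] yin[OF True]]
          by simp
        finally show "bil (snd X) (f v + g (h v)) (g w') = 0" unfolding fg gw .
      qed
      then show ?thesis using eps_cosp_unique[OF W r True] by simp
    qed
  qed
  show ?thesis
  proof (intro bexI)
    show "cls V W (X, f, g) \<in> Tq_hom V W" using cls_hom[OF r] .
    show "eps_mor (V, W, cls V W (X, f, g)) = (fst V, fst W, h)"
      using eps_mor_eq[OF W cls_hom[OF r] cls_self[OF r]] e by simp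
  qed
qed

section \<open>Hyperbolic objects\<close>

definition Pq :: "vec \<Rightarrow> bit" where "Pq x = (if x \<in> fvec 2 then x 0 * x 1 else 0)"

lemma fvec2_eq: "x \<in> fvec 2 \<Longrightarrow> y \<in> fvec 2 \<Longrightarrow> x 0 = y 0 \<Longrightarrow> x 1 = y 1 \<Longrightarrow> x = y"
proof (rule ext)
  fix i assume a: "x \<in> fvec 2" "y \<in> fvec 2" "x 0 = y 0" "x 1 = y 1"
  show "x i = y i"
  proof (cases "i < 2")
    case True then have "i = 0 \<or> i = 1" by auto
    then show ?thesis using a by auto
  next
    case False then show ?thesis using a by (simp add: fvec_def)
  qed
qed

lemma bil_P: "x \<in> fvec 2 \<Longrightarrow> y \<in> fvec 2 \<Longrightarrow> bil Pq x y = x 0 * y 1 + y 0 * x 1"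
  using bit_cases2[of "x 0"] bit_cases2[of "x 1"] bit_cases2[of "y 0"] bit_cases2[of "y 1"]
  by (auto simp: bil_def Pq_def fvec_add)

lemma P_obj: "(2, Pq) \<in> Tq_obj"
proof (rule Tq_objI)
  show "is_quad 2 Pq" unfolding is_quad_def
  proof (intro ballI conjI)
    fix x y z assume x: "x \<in> fvec 2" and y: "y \<in> fvec 2" and z: "z \<in> fvec 2"
    show "bil Pq (x + y) z = bil Pq x z + bil Pq y z" using x y z fvec_add
      by (simp add: bil_P algebra_simps)
    show "bil Pq x (y + z) = bil Pq x y + bil Pq x z" using x y z fvec_add
      by (simp add: bil_P algebra_simps)
  qed
  show "nondeg 2 Pq" unfolding nondeg_def
  proof (intro ballI impI)
    fix v assume v: "v \<in> fvec 2" and o: "\<forall>w\<in>fvec 2. bil Pq v w = 0"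
    have u0: "unitv 0 \<in> fvec 2" and u1: "unitv 1 \<in> fvec 2" by (simp_all add: unitv_fvec)
    have "bil Pq v (unitv 0) = 0" "bil Pq v (unitv 1) = 0" using o u0 u1 by auto
    then have "v 1 = 0" "v 0 = 0" using v u0 u1 by (simp_all add: bil_P unitv_def)
    then show "v = 0" using fvec2_eq[OF v fvec_0] by simp
  qed
qed (simp add: Pq_def)

lemma O_obj: "(0, \<lambda>x. 0) \<in> Tq_obj"
  by (rule Tq_objI) (auto simp: is_quad_def nondeg_def fvec_zero0 bil_def)

primrec Hyp :: "nat \<Rightarrow> qobj" where
  "Hyp 0 = (0, \<lambda>x. 0)"
| "Hyp (Suc k) = osum (Hyp k) (2, Pq)"

lemma Hyp_obj: "Hyp k \<in> Tq_obj"
  by (induction k) (simp_all add: O_obj osum_obj P_obj)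

lemma Hyp_dim: "fst (Hyp k) = 2 * k"
  by (induction k) simp_all

definition prj :: "nat \<Rightarrow> nat \<Rightarrow> vec \<Rightarrow> vec" where
  "prj N n x = (if x \<in> fvec N then lo n x else 0)"

lemma Ef_emb: "n \<le> N \<Longrightarrow> Ef_map n N (fid n)"
  by (auto simp: Ef_map_def fid_def fvec_mono)

lemma Ef_prj: "Ef_map N n (prj N n)"
  by (auto simp: Ef_map_def prj_def lo_fvec lo_add fvec_add)

lemma prj_emb: "n \<le> N \<Longrightarrow> prj N n \<circ> fid n = fid n"
  by (auto simp: fun_eq_iff prj_def fid_def lo_id fvec_mono)

definition smul :: "bit \<Rightarrow> vec \<Rightarrow> vec" where "smul c s = (\<lambda>i. c * s i)"

lemma smul_add: "smul (a + b) s = smul a s + smul b s" by (simp add: smul_def fun_eq_iff distrib_right)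
lemma smul_0[simp]: "smul 0 s = 0" by (simp add: smul_def fun_eq_iff)
lemma smul_1[simp]: "smul 1 s = s" by (simp add: smul_def fun_eq_iff)

definition subsp :: "vec set \<Rightarrow> bool" where
  "subsp S \<longleftrightarrow> 0 \<in> S \<and> (\<forall>x\<in>S. \<forall>y\<in>S. x + y \<in> S)"

lemma subspace_basis:
  "subsp S \<Longrightarrow> S \<subseteq> fvec N \<Longrightarrow> \<exists>k u. Ef_map k N u \<and> inj_on u (fvec k) \<and> u ` fvec k = S"
proof (induction N arbitrary: S)
  case 0
  then have "S = {0}" by (auto simp: fvec_zero0 subsp_def)
  moreover have "Ef_map 0 0 (fid 0)" by (rule Ef_map_fid)
  moreover have "inj_on (fid 0) (fvec 0)" by (simp add: fvec_zero0)
  moreover have "fid 0 ` fvec 0 = {0}" by (simp add: fvec_zero0 fid_def)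
  ultimately show ?case by blast
next
  case (Suc N)
  define S0 where "S0 = {x \<in> S. x N = 0}"
  have S0sub: "subsp S0" using Suc.prems(1) by (auto simp: subsp_def S0_def)
  have S0f: "S0 \<subseteq> fvec N"
  proof
    fix x assume "x \<in> S0"
    then have "x \<in> fvec (Suc N)" "x N = 0" using Suc.prems(2) by (auto simp: S0_def)
    then show "x \<in> fvec N" by (auto simp: fvec_def) (metis le_antisym not_less_eq_eq)
  qed
  obtain k0 u0 where u0: "Ef_map k0 N u0" "inj_on u0 (fvec k0)" "u0 ` fvec k0 = S0"
    using Suc.IH[OF S0sub S0f] by blast
  show ?case
  proof (cases "\<forall>x\<in>S. x N = 0")
    case True
    then have "S = S0" by (auto simp: S0_def)
    moreover have "Ef_map k0 (Suc N) u0" using u0(1) by (auto simp: Ef_map_def fvec_mono)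
    ultimately show ?thesis using u0 by blast
  next
    case False
    then obtain s where s: "s \<in> S" "s N = 1" by auto
    have sf: "s \<in> fvec (Suc N)" using s Suc.prems(2) by auto
    define u where "u = (\<lambda>x. if x \<in> fvec (Suc k0) then u0 (lo k0 x) + smul (x k0) s else 0)"
    have u0f: "u0 (lo k0 x) \<in> fvec N" for x using Ef_map_in[OF u0(1) lo_fvec] .
    have smf: "smul c s \<in> fvec (Suc N)" for c using sf by (simp add: smul_def fvec_def)
    have Ef: "Ef_map (Suc k0) (Suc N) u"
      unfolding Ef_map_def
    proof (intro conjI ballI allI impI)
      fix x assume "x \<in> fvec (Suc k0)"
      then show "u x \<in> fvec (Suc N)" using fvec_mono[OF u0f, of "Suc N"] smf by (simp add: u_def fvec_add)
    next
      fix x y assume x: "x \<in> fvec (Suc k0)" and y: "y \<in> fvec (Suc k0)"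
      have "u0 (lo k0 (x + y)) = u0 (lo k0 x) + u0 (lo k0 y)"
        unfolding lo_add using Ef_map_add[OF u0(1) lo_fvec lo_fvec] .
      moreover have "smul ((x + y) k0) s = smul (x k0) s + smul (y k0) s" by (simp add: smul_add)
      ultimately show "u (x + y) = u x + u y" using x y fvec_add[OF x y] by (simp add: u_def ac_simps)
    next
      fix x assume "x \<notin> fvec (Suc k0)" then show "u x = 0" by (simp add: u_def)
    qed
    have inj: "inj_on u (fvec (Suc k0))"
    proof (rule inj_onI)
      fix x y assume x: "x \<in> fvec (Suc k0)" and y: "y \<in> fvec (Suc k0)" and e: "u x = u y"
      have N0: "u0 (lo k0 z) N = 0" for z using u0f[of z] by (simp add: fvec_def)
      have "u x N = x k0" using x s(2) N0 by (simp add: u_def smul_def)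
      moreover have "u y N = y k0" using y s(2) N0 by (simp add: u_def smul_def)
      ultimately have k: "x k0 = y k0" using e by simp
      then have "u0 (lo k0 x) = u0 (lo k0 y)" using e x y by (simp add: u_def)
      then have l: "lo k0 x = lo k0 y" using u0(2) lo_fvec by (meson inj_onD)
      show "x = y"
      proof
        fix i show "x i = y i"
        proof (cases "i < k0")
          case True then show ?thesis using fun_cong[OF l, of i] by (simp add: lo_def)
        next
          case False
          then have "i = k0 \<or> i \<ge> Suc k0" by auto
          then show ?thesis using k x y by (auto simp: fvec_def)
        qed
      qed
    qed
    have img: "u ` fvec (Suc k0) = S"
    proof
      show "u ` fvec (Suc k0) \<subseteq> S"
      proof
        fix z assume "z \<in> u ` fvec (Suc k0)"
        then obtain x where x: "x \<in> fvec (Suc k0)" "z = u x" by blast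
        have "u0 (lo k0 x) \<in> S" using u0(3) lo_fvec S0_def by blast
        moreover have "smul (x k0) s \<in> S" using bit_cases2[of "x k0"] s(1) Suc.prems(1)
          by (auto simp: subsp_def)
        ultimately show "z \<in> S" using x Suc.prems(1) by (simp add: u_def subsp_def)
      qed
    next
      show "S \<subseteq> u ` fvec (Suc k0)"
      proof
        fix z assume z: "z \<in> S"
        show "z \<in> u ` fvec (Suc k0)"
        proof (cases "z N = 0")
          case True
          then have "z \<in> S0" using z by (simp add: S0_def)
          then obtain y where y: "y \<in> fvec k0" "z = u0 y" using u0(3) by blast
          have "y \<in> fvec (Suc k0)" "y k0 = 0" "lo k0 y = y" using y(1) fvec_mono[OF y(1)] lo_id[OF y(1)]
            by (auto simp: fvec_def)
          then have "u y = z" using y by (simp add: u_def)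
          then show ?thesis using \<open>y \<in> fvec (Suc k0)\<close> by blast
        next
          case False
          then have "z N = 1" by simp
          then have "z + s \<in> S0" using z s Suc.prems(1) by (simp add: S0_def subsp_def)
          then obtain y where y: "y \<in> fvec k0" "z + s = u0 y" using u0(3) by blast
          define x where "x = y + unitv k0"
          have yk: "y k0 = 0" using y(1) by (simp add: fvec_def)
          have xf: "x \<in> fvec (Suc k0)" using fvec_mono[OF y(1), of "Suc k0"] unitv_fvec[of k0 "Suc k0"]
            by (simp add: x_def fvec_add)
          have "lo k0 x = y" using y(1) by (auto simp: x_def lo_def unitv_def fun_eq_iff fvec_def)
          moreover have "x k0 = 1" using yk by (simp add: x_def unitv_def)
          ultimately have "u x = z + s + s" using xf y by (simp add: u_def)
          then have "u x = z" by (simp add: add.assoc)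
          then show ?thesis using xf by blast
        qed
      qed
    qed
    show ?thesis using Ef inj img by blast
  qed
qed

section \<open>Existence of pseudo push-outs\<close>

lemma orth_subsp:
  assumes X: "is_quad (fst X) (snd X)" and g: "Eq_map W X g"
  shows "subsp (orth X g W)" "orth X g W \<subseteq> fvec (fst X)"
proof -
  have gin: "\<And>w. w \<in> fvec (fst W) \<Longrightarrow> g w \<in> fvec (fst X)" using Ef_map_in[OF Eq_map_Ef[OF g]] by auto
  show "subsp (orth X g W)" unfolding subsp_def orth_def
    using quad_bil0[OF X gin] quad_lin1[OF X _ _ gin] fvec_add by auto
  show "orth X g W \<subseteq> fvec (fst X)" by (auto simp: orth_def)
qed

lemma ppo_exists:
  assumes W: "W \<in> Tq_obj" and X1: "X1 \<in> Tq_obj" and X2: "X2 \<in> Tq_obj"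
    and g1: "Eq_map W X1 g1" and f2: "Eq_map W X2 f2"
  shows "\<exists>Z a b. ppo W X1 g1 X2 f2 Z a b"
proof -
  define S where "S = orth X2 f2 W"
  have Xq: "is_quad (fst X2) (snd X2)" and Xn: "nondeg (fst X2) (snd X2)" using Tq_objD[OF X2] by auto
  have X1q: "is_quad (fst X1) (snd X1)" using Tq_objD[OF X1] by auto
  have Wq: "is_quad (fst W) (snd W)" using Tq_objD[OF W] by auto
  have f2E: "Ef_map (fst W) (fst X2) f2" and g1E: "Ef_map (fst W) (fst X1) g1" using f2 g1 Eq_map_Ef by auto
  have f2in: "\<And>w. w \<in> fvec (fst W) \<Longrightarrow> f2 w \<in> fvec (fst X2)" using Ef_map_in[OF f2E] by auto
  have g1in: "\<And>w. w \<in> fvec (fst W) \<Longrightarrow> g1 w \<in> fvec (fst X1)" using Ef_map_in[OF g1E] by auto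
  have Ssub: "subsp S" and Sf: "S \<subseteq> fvec (fst X2)" using orth_subsp[OF Xq f2] by (auto simp: S_def)
  have Sadd: "s1 \<in> S \<Longrightarrow> s2 \<in> S \<Longrightarrow> s1 + s2 \<in> S" for s1 s2 using Ssub by (simp add: subsp_def)
  have Sorth: "s \<in> S \<Longrightarrow> w \<in> fvec (fst W) \<Longrightarrow> bil (snd X2) s (f2 w) = 0" for s w by (simp add: S_def orth_def)
  obtain k u where u: "Ef_map k (fst X2) u" "inj_on u (fvec k)" "u ` fvec k = S"
    using subspace_basis[OF Ssub Sf] by blast
  have uS: "y \<in> fvec k \<Longrightarrow> u y \<in> S" for y using u(3) by blast
  have uX: "y \<in> fvec k \<Longrightarrow> u y \<in> fvec (fst X2)" for y using uS Sf by blast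
  \<comment> \<open>projection onto f2(W)\<close>
  define p where "p = eps_cosp X2 W (X2, fid (fst X2), f2)"
  have r0: "(X2, fid (fst X2), f2) \<in> cospans X2 W" using X2 f2 Eq_map_fid by (simp add: cospans_def)
  have pE: "Ef_map (fst X2) (fst W) p" using eps_cosp_Ef[OF W r0] by (simp add: p_def)
  have pP: "p x \<in> fvec (fst W) \<and> x + f2 (p x) \<in> S" if x: "x \<in> fvec (fst X2)" for x
  proof -
    have "pcond W X2 f2 (fid (fst X2) x) (p x)" using eps_cosp_prop[OF W r0 x] by (simp add: p_def)
    then have a: "p x \<in> fvec (fst W)" "\<forall>w'\<in>fvec (fst W). bil (snd X2) (x + f2 (p x)) (f2 w') = 0"
      using x by (auto simp: pcond_def fid_def)
    have "x + f2 (p x) \<in> fvec (fst X2)" using x f2in[OF a(1)] by auto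
    then show ?thesis using a by (simp add: S_def orth_def)
  qed
  have p_f2: "p (f2 w) = w" if w: "w \<in> fvec (fst W)" for w
  proof -
    have "pcond W X2 f2 (fid (fst X2) (f2 w)) w"
      using w f2in[OF w] quad_bil0[OF Xq f2in] by (simp add: pcond_def fid_def)
    then show ?thesis using eps_cosp_unique[OF W r0 f2in[OF w]] by (simp add: p_def)
  qed
  have p_S: "p s = 0" if s: "s \<in> S" for s
  proof -
    have sX: "s \<in> fvec (fst X2)" using s Sf by blast
    have "pcond W X2 f2 (fid (fst X2) s) 0"
      using sX Sorth[OF s] Ef_map_0[OF f2E] by (simp add: pcond_def fid_def)
    then show ?thesis using eps_cosp_unique[OF W r0 sX] by (simp add: p_def)
  qed
  define uinv where "uinv = (\<lambda>s. THE y. y \<in> fvec k \<and> u y = s)"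
  have uinvP: "uinv s \<in> fvec k \<and> u (uinv s) = s" if s: "s \<in> S" for s
  proof -
    have "\<exists>!y. y \<in> fvec k \<and> u y = s" using s u(2,3) by (auto dest: inj_onD)
    then show ?thesis unfolding uinv_def by (rule theI')
  qed
  have uinv_u: "uinv (u y) = y" if y: "y \<in> fvec k" for y
  proof -
    have "uinv (u y) \<in> fvec k" "u (uinv (u y)) = u y" using uinvP[OF uS[OF y]] by auto
    then show ?thesis using u(2) y by (auto dest: inj_onD)
  qed
  have uinv_add: "uinv (s1 + s2) = uinv s1 + uinv s2" if "s1 \<in> S" "s2 \<in> S" for s1 s2
  proof -
    have a: "uinv s1 \<in> fvec k" "uinv s2 \<in> fvec k" "u (uinv s1) = s1" "u (uinv s2) = s2"
      using uinvP that by auto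
    have "u (uinv s1 + uinv s2) = s1 + s2" using Ef_map_add[OF u(1) a(1,2)] a(3,4) by simp
    then show ?thesis using uinv_u[OF fvec_add[OF a(1,2)]] by simp
  qed
  have uinv0: "uinv 0 = 0" using uinv_u[OF fvec_0] Ef_map_0[OF u(1)] by simp
  \<comment> \<open>the complement object\<close>
  define U where "U = (k, \<lambda>y. if y \<in> fvec k then snd X2 (u y) else 0)"
  have fU: "fst U = k" by (simp add: U_def)
  have bilU: "bil (snd U) y y' = bil (snd X2) (u y) (u y')" if "y \<in> fvec k" "y' \<in> fvec k" for y y'
    using that Ef_map_add[OF u(1) that] by (simp add: U_def bil_def fvec_add)
  have U: "U \<in> Tq_obj"
  proof -
    have quad: "is_quad k (snd U)" unfolding is_quad_def
    proof (intro ballI conjI)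
      fix x y z assume x: "x \<in> fvec k" and y: "y \<in> fvec k" and z: "z \<in> fvec k"
      show "bil (snd U) (x + y) z = bil (snd U) x z + bil (snd U) y z"
        using bilU x y z fvec_add[OF x y] Ef_map_add[OF u(1) x y] quad_lin1[OF Xq uX[OF x] uX[OF y] uX[OF z]]
        by simp
      show "bil (snd U) x (y + z) = bil (snd U) x y + bil (snd U) x z"
        using bilU x y z fvec_add[OF y z] Ef_map_add[OF u(1) y z] quad_lin2[OF Xq uX[OF x] uX[OF y] uX[OF z]]
        by simp
    qed
    have nd: "nondeg k (snd U)" unfolding nondeg_def
    proof (intro ballI impI)
      fix y assume y: "y \<in> fvec k" and o: "\<forall>w\<in>fvec k. bil (snd U) y w = 0"
      have "u y = 0"
      proof (rule nondegD[OF Xn uX[OF y]])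
        fix x assume x: "x \<in> fvec (fst X2)"
        have px: "p x \<in> fvec (fst W)" "x + f2 (p x) \<in> S" using pP[OF x] by auto
        have t1: "bil (snd X2) (u y) (f2 (p x)) = 0" using Sorth[OF uS[OF y] px(1)] .
        have "x + f2 (p x) \<in> u ` fvec k" using px(2) u(3) by simp
        then obtain y' where y': "y' \<in> fvec k" "u y' = x + f2 (p x)" by (metis imageE)
        have t2: "bil (snd X2) (u y) (x + f2 (p x)) = 0" using o y' bilU[OF y y'(1)] by simp
        have "f2 (p x) + (x + f2 (p x)) = x + (f2 (p x) + f2 (p x))" by (rule add.left_commute)
        then have xx: "f2 (p x) + (x + f2 (p x)) = x" by simp
        have "bil (snd X2) (u y) (f2 (p x) + (x + f2 (p x))) = bil (snd X2) (u y) (f2 (p x)) + bil (snd X2) (u y) (x + f2 (p x))"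
          using quad_lin2[OF Xq uX[OF y] f2in[OF px(1)], of "x + f2 (p x)"] x f2in[OF px(1)] fvec_add by blast
        then show "bil (snd X2) (u y) x = 0" using t1 t2 xx by simp
      qed
      then show "y = 0" using uinv_u[OF y] uinv0 by simp
    qed
    show ?thesis unfolding U_def using quad nd by (intro Tq_objI) (simp_all add: U_def)
  qed
  define Z where "Z = osum X1 U"
  define a where "a = fid (fst X1)"
  define b where "b = (\<lambda>x. if x \<in> fvec (fst X2) then g1 (p x) + shr (fst X1) (uinv (x + f2 (p x))) else 0)"
  have Z: "Z \<in> Tq_obj" using osum_obj[OF X1 U] by (simp add: Z_def)
  have a: "Eq_map X1 Z a" using Eq_map_inl[OF U] by (simp add: Z_def a_def)
  have bE: "Ef_map (fst X2) (fst Z) b"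
    unfolding Ef_map_def
  proof (intro conjI ballI allI impI)
    fix x assume x: "x \<in> fvec (fst X2)"
    have 1: "g1 (p x) \<in> fvec (fst Z)" using fvec_mono[OF g1in[OF conjunct1[OF pP[OF x]]]] by (simp add: Z_def)
    have 2: "shr (fst X1) (uinv (x + f2 (p x))) \<in> fvec (fst Z)"
      using shr_fvec[OF conjunct1[OF uinvP[OF conjunct2[OF pP[OF x]]]]] by (simp add: Z_def fU)
    show "b x \<in> fvec (fst Z)" using x 1 2 by (simp add: b_def fvec_add)
  next
    fix x y assume x: "x \<in> fvec (fst X2)" and y: "y \<in> fvec (fst X2)"
    have pxy: "p (x + y) = p x + p y" using Ef_map_add[OF pE x y] .
    have px: "p x \<in> fvec (fst W)" "x + f2 (p x) \<in> S" using pP[OF x] by auto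
    have py: "p y \<in> fvec (fst W)" "y + f2 (p y) \<in> S" using pP[OF y] by auto
    have e1: "g1 (p (x + y)) = g1 (p x) + g1 (p y)" using pxy Ef_map_add[OF g1E px(1) py(1)] by simp
    have e2: "x + y + f2 (p (x + y)) = (x + f2 (p x)) + (y + f2 (p y))"
      using pxy Ef_map_add[OF f2E px(1) py(1)] by (simp add: ac_simps)
    have e3: "uinv (x + y + f2 (p (x + y))) = uinv (x + f2 (p x)) + uinv (y + f2 (p y))"
      unfolding e2 using uinv_add[OF px(2) py(2)] .
    have "b (x + y) = g1 (p (x + y)) + shr (fst X1) (uinv (x + y + f2 (p (x + y))))"
      using fvec_add[OF x y] by (simp add: b_def)
    also have "\<dots> = (g1 (p x) + shr (fst X1) (uinv (x + f2 (p x)))) + (g1 (p y) + shr (fst X1) (uinv (y + f2 (p y))))"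
      unfolding e1 e3 shr_add by (simp only: ac_simps)
    also have "\<dots> = b x + b y" using x y by (simp add: b_def)
    finally show "b (x + y) = b x + b y" .
  next
    fix x assume "x \<notin> fvec (fst X2)" then show "b x = 0" by (simp add: b_def)
  qed
  have bq: "snd Z (b x) = snd X2 x" if x: "x \<in> fvec (fst X2)" for x
  proof -
    have px: "p x \<in> fvec (fst W)" "x + f2 (p x) \<in> S" using pP[OF x] by auto
    define t where "t = x + f2 (p x)"
    have t: "t \<in> S" "uinv t \<in> fvec (fst U)" "u (uinv t) = t" using px(2) uinvP[of t] by (auto simp: t_def fU)
    have "snd Z (b x) = snd X1 (g1 (p x)) + snd U (uinv t)"
      using osum_q[OF g1in[OF px(1)] t(2)] x by (simp add: Z_def b_def t_def)
    also have "\<dots> = snd W (p x) + snd X2 t"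
      using Eq_map_q[OF g1 px(1)] t(2,3) by (simp add: U_def)
    also have "\<dots> = snd X2 x"
    proof -
      have xx: "x = f2 (p x) + t" by (simp add: t_def add.assoc[symmetric])
      have tX: "t \<in> fvec (fst X2)" using t(1) Sf by blast
      have "bil (snd X2) (f2 (p x)) t = 0" using Sorth[OF t(1) px(1)] bil_sym[of "snd X2" "f2 (p x)" t] by simp
      then have "snd X2 x = snd X2 (f2 (p x)) + snd X2 t" using q_add[of "snd X2" "f2 (p x)" t] xx by simp
      then show ?thesis using Eq_map_q[OF f2 px(1)] by simp
    qed
    finally show ?thesis .
  qed
  have b: "Eq_map X2 Z b" using bE bq by (simp add: Eq_map_def)
  have ab: "a \<circ> g1 = b \<circ> f2"
  proof
    fix w show "(a \<circ> g1) w = (b \<circ> f2) w"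
    proof (cases "w \<in> fvec (fst W)")
      case True
      have "b (f2 w) = g1 w + shr (fst X1) (uinv 0)"
        using True f2in[OF True] p_f2[OF True] by (simp add: b_def)
      then show ?thesis using g1in[OF True] uinv0 by (simp add: a_def fid_def)
    next
      case False
      then show ?thesis using Ef_map_out[OF g1E False] Ef_map_out[OF f2E False] Ef_map_0[OF bE]
        by (simp add: a_def fid_def)
    qed
  qed
  have span: "\<forall>z\<in>fvec (fst Z). \<exists>x1\<in>fvec (fst X1). \<exists>x2\<in>fvec (fst X2). z = a x1 + b x2"
  proof
    fix z assume z: "z \<in> fvec (fst Z)"
    have hz: "hi (fst X1) z \<in> fvec k" using hi_fvec[of z "fst X1" k] z by (simp add: Z_def fU)
    define s where "s = u (hi (fst X1) z)"
    have s: "s \<in> S" "s \<in> fvec (fst X2)" using uS[OF hz] uX[OF hz] by (simp_all add: s_def)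
    have "b s = g1 0 + shr (fst X1) (uinv (s + f2 0))" using s p_S[OF s(1)] by (simp add: b_def)
    also have "\<dots> = shr (fst X1) (hi (fst X1) z)"
      using Ef_map_0[OF g1E] Ef_map_0[OF f2E] uinv_u[OF hz] by (simp add: s_def)
    finally have "z = a (lo (fst X1) z) + b s" using lo_hi[of "fst X1" z] lo_fvec by (simp add: a_def fid_def)
    then show "\<exists>x1\<in>fvec (fst X1). \<exists>x2\<in>fvec (fst X2). z = a x1 + b x2" using lo_fvec[of "fst X1" z] s(2) by blast
  qed
  have orth: "\<forall>x1\<in>orth X1 g1 W. \<forall>x2\<in>orth X2 f2 W. bil (snd Z) (a x1) (b x2) = 0"
  proof (intro ballI)
    fix x1 x2 assume x1: "x1 \<in> orth X1 g1 W" and x2: "x2 \<in> orth X2 f2 W"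
    have x1f: "x1 \<in> fvec (fst X1)" using x1 by (simp add: orth_def)
    have x2S: "x2 \<in> S" using x2 by (simp add: S_def)
    have x2f: "x2 \<in> fvec (fst X2)" using x2S Sf by blast
    have ui: "uinv x2 \<in> fvec (fst U)" using uinvP[OF x2S] by (simp add: fU)
    have "b x2 = 0 + shr (fst X1) (uinv x2)"
      using x2f p_S[OF x2S] Ef_map_0[OF g1E] Ef_map_0[OF f2E] by (simp add: b_def)
    moreover have "a x1 = x1 + shr (fst X1) 0" using x1f by (simp add: a_def fid_def)
    ultimately have "bil (snd Z) (a x1) (b x2) = bil (snd X1) x1 0 + bil (snd U) 0 (uinv x2)"
      using osum_bil[OF x1f fvec_0 fvec_0 ui] by (simp add: Z_def)
    then show "bil (snd Z) (a x1) (b x2) = 0"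
      using quad_bil0'[OF X1q x1f] quad_bil0[OF Tq_objD(1)[OF U] ui] by simp
  qed
  have "ppo W X1 g1 X2 f2 Z a b" unfolding ppo_def by (intro conjI Z a b ab span orth)
  then show ?thesis by blast
qed

section \<open>Functoriality of epsilon\<close>

lemma eps_id:
  assumes V: "V \<in> Tq_obj"
  shows "eps_mor (Tq_id V) = (fst V, fst V, fid (fst V))"
proof -
  define r where "r = (V, fid (fst V), fid (fst V))"
  have r: "r \<in> cospans V V" using V Eq_map_fid by (simp add: cospans_def r_def)
  have e: "eps_cosp V V r = fid (fst V)"
  proof
    fix v show "eps_cosp V V r v = fid (fst V) v"
    proof (cases "v \<in> fvec (fst V)")
      case False then show ?thesis by (simp add: r_def eps_cosp_out fid_def)
    next
      case True
      have "pcond V V (fid (fst V)) (fid (fst V) v) v"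
        using True quad_bil0[OF Tq_objD(1)[OF V]] by (simp add: pcond_def fid_def)
      then show ?thesis using eps_cosp_unique[OF V r[unfolded r_def] True] True
        by (simp add: r_def fid_def)
    qed
  qed
  show ?thesis using eps_mor_eq[OF V cls_hom[OF r] cls_self[OF r]] e by (simp add: Tq_id_def r_def)
qed

lemma pcond_orth: "pcond W X g x w \<Longrightarrow> x \<in> fvec (fst X) \<Longrightarrow> Ef_map (fst W) (fst X) g \<Longrightarrow>
   x + g w \<in> orth X g W"
  unfolding pcond_def orth_def using Ef_map_in fvec_add by blast

lemma eps_comp_fun:
  assumes V: "V \<in> Tq_obj" and W: "W \<in> Tq_obj" and Y: "Y \<in> Tq_obj"
    and r1: "(X1, f1, g1) \<in> cospans V W" and r2: "(X2, f2, g2) \<in> cospans W Y"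
    and P: "ppo W X1 g1 X2 f2 Z a b"
  shows "(Z, a \<circ> f1, b \<circ> g2) \<in> cospans V Y"
    and "eps_cosp V Y (Z, a \<circ> f1, b \<circ> g2) = eps_cosp W Y (X2, f2, g2) \<circ> eps_cosp V W (X1, f1, g1)"
proof -
  have Z: "Z \<in> Tq_obj" and a: "Eq_map X1 Z a" and b: "Eq_map X2 Z b" and ab: "a \<circ> g1 = b \<circ> f2"
    and orthP: "\<forall>x1\<in>orth X1 g1 W. \<forall>x2\<in>orth X2 f2 W. bil (snd Z) (a x1) (b x2) = 0"
    using P by (auto simp: ppo_def)
  have X1: "X1 \<in> Tq_obj" and f1: "Eq_map V X1 f1" and g1: "Eq_map W X1 g1" using cospansD[OF r1] by auto
  have X2: "X2 \<in> Tq_obj" and f2: "Eq_map W X2 f2" and g2: "Eq_map Y X2 g2" using cospansD[OF r2] by auto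
  have r3: "(Z, a \<circ> f1, b \<circ> g2) \<in> cospans V Y"
    using Z Eq_map_comp[OF f1 a] Eq_map_comp[OF g2 b] by (simp add: cospans_def)
  then show "(Z, a \<circ> f1, b \<circ> g2) \<in> cospans V Y" .
  have aE: "Ef_map (fst X1) (fst Z) a" and bE: "Ef_map (fst X2) (fst Z) b" using a b Eq_map_Ef by auto
  have f1E: "Ef_map (fst V) (fst X1) f1" and g1E: "Ef_map (fst W) (fst X1) g1" using f1 g1 Eq_map_Ef by auto
  have f2E: "Ef_map (fst W) (fst X2) f2" and g2E: "Ef_map (fst Y) (fst X2) g2" using f2 g2 Eq_map_Ef by auto
  have Zq: "is_quad (fst Z) (snd Z)" using Tq_objD(1)[OF Z] .
  have X2q: "is_quad (fst X2) (snd X2)" using Tq_objD(1)[OF X2] .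
  show "eps_cosp V Y (Z, a \<circ> f1, b \<circ> g2) = eps_cosp W Y (X2, f2, g2) \<circ> eps_cosp V W (X1, f1, g1)"
  proof
    fix v
    show "eps_cosp V Y (Z, a \<circ> f1, b \<circ> g2) v = (eps_cosp W Y (X2, f2, g2) \<circ> eps_cosp V W (X1, f1, g1)) v"
    proof (cases "v \<in> fvec (fst V)")
      case False
      then show ?thesis using eps_cosp_out Ef_map_0[OF eps_cosp_Ef[OF Y r2]] by simp
    next
      case v: True
      define w where "w = eps_cosp V W (X1, f1, g1) v"
      define y where "y = eps_cosp W Y (X2, f2, g2) w"
      have pw: "pcond W X1 g1 (f1 v) w" using eps_cosp_prop[OF W r1 v] by (simp add: w_def)
      have wf: "w \<in> fvec (fst W)" using pw by (simp add: pcond_def)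
      have py: "pcond Y X2 g2 (f2 w) y" using eps_cosp_prop[OF Y r2 wf] by (simp add: y_def)
      have yf: "y \<in> fvec (fst Y)" using py by (simp add: pcond_def)
      define x1 where "x1 = f1 v + g1 w"
      define x2 where "x2 = f2 w + g2 y"
      have x1o: "x1 \<in> orth X1 g1 W" using pcond_orth[OF pw Ef_map_in[OF f1E v] g1E] by (simp add: x1_def)
      have x1f: "x1 \<in> fvec (fst X1)" using x1o by (simp add: orth_def)
      have x2f: "x2 \<in> fvec (fst X2)" using Ef_map_in[OF f2E wf] Ef_map_in[OF g2E yf] by (simp add: x2_def fvec_add)
      have g1w: "g1 w \<in> fvec (fst X1)" using Ef_map_in[OF g1E wf] .
      have f2w: "f2 w \<in> fvec (fst X2)" using Ef_map_in[OF f2E wf] .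
      have g2y: "g2 y \<in> fvec (fst X2)" using Ef_map_in[OF g2E yf] .
      have f1v: "f1 v = x1 + g1 w" by (simp add: x1_def add.assoc)
      have "a (f1 v) = a x1 + a (g1 w)" unfolding f1v using Ef_map_add[OF aE x1f g1w] .
      also have "a (g1 w) = b (f2 w)" using fun_cong[OF ab, of w] by simp
      finally have A: "a (f1 v) = a x1 + b (f2 w)" .
      have B: "b x2 = b (f2 w) + b (g2 y)" unfolding x2_def by (rule Ef_map_add[OF bE f2w g2y])
      have e1: "a (f1 v) + b (g2 y) = a x1 + b x2" unfolding A B by (simp only: add.assoc)
      have "pcond Y Z (b \<circ> g2) ((a \<circ> f1) v) y"
        unfolding pcond_def
      proof (intro conjI ballI)
        show "y \<in> fvec (fst Y)" by (rule yf)
      next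
        fix y' assume y': "y' \<in> fvec (fst Y)"
        have g2y': "g2 y' \<in> fvec (fst X2)" using Ef_map_in[OF g2E y'] .
        obtain w'' where w'': "pcond W X2 f2 (g2 y') w''"
          using proj_ex[OF W X2q f2 g2y'] by (auto simp: pcond_def)
        have w''f: "w'' \<in> fvec (fst W)" using w'' by (simp add: pcond_def)
        define t where "t = g2 y' + f2 w''"
        have to: "t \<in> orth X2 f2 W" using pcond_orth[OF w'' g2y' f2E] by (simp add: t_def)
        have tf: "t \<in> fvec (fst X2)" using to by (simp add: orth_def)
        have f2w'': "f2 w'' \<in> fvec (fst X2)" using Ef_map_in[OF f2E w''f] .
        have g2e: "g2 y' = f2 w'' + t" by (simp add: t_def add.left_commute[of "f2 w''"])
        have bg2: "b (g2 y') = a (g1 w'') + b t"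
          unfolding g2e Ef_map_add[OF bE f2w'' tf] using fun_cong[OF ab, of w''] by simp
        have ax1: "a x1 \<in> fvec (fst Z)" using Ef_map_in[OF aE x1f] .
        have bx2: "b x2 \<in> fvec (fst Z)" using Ef_map_in[OF bE x2f] .
        have bg2f: "b (g2 y') \<in> fvec (fst Z)" using Ef_map_in[OF bE g2y'] .
        have ag1: "a (g1 w'') \<in> fvec (fst Z)" using Ef_map_in[OF aE Ef_map_in[OF g1E w''f]] .
        have btf: "b t \<in> fvec (fst Z)" using Ef_map_in[OF bE tf] .
        have z1: "bil (snd Z) (b x2) (b (g2 y')) = 0"
          using Eq_map_bil[OF b x2f g2y'] py y' by (simp add: pcond_def x2_def)
        have z2: "bil (snd Z) (a x1) (a (g1 w'')) = 0"
          using Eq_map_bil[OF a x1f Ef_map_in[OF g1E w''f]] x1o w''f by (simp add: orth_def)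
        have z3: "bil (snd Z) (a x1) (b t) = 0" using orthP x1o to by blast
        have "bil (snd Z) (a x1) (b (g2 y')) = 0"
          unfolding bg2 quad_lin2[OF Zq ax1 ag1 btf] z2 z3 by simp
        then show "bil (snd Z) ((a \<circ> f1) v + (b \<circ> g2) y) ((b \<circ> g2) y') = 0"
          using e1 quad_lin1[OF Zq ax1 bx2 bg2f] z1 by simp
      qed
      then show ?thesis using eps_cosp_unique[OF Y r3 v] by (simp add: w_def y_def)
    qed
  qed
qed

lemma some_in_hom: "c \<in> Tq_hom V W \<Longrightarrow> (SOME r. r \<in> c) \<in> c"
  using hom_ne by (metis someI_ex)

lemma eps_comp:
  assumes V: "V \<in> Tq_obj" and W: "W \<in> Tq_obj" and Y: "Y \<in> Tq_obj"
    and c1: "c1 \<in> Tq_hom V W" and c2: "c2 \<in> Tq_hom W Y"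
  shows "comp_cls V W Y c1 c2 \<in> Tq_hom V Y \<and>
    (\<exists>h1 h2. eps_mor (V, W, c1) = (fst V, fst W, h1) \<and> eps_mor (W, Y, c2) = (fst W, fst Y, h2)
      \<and> eps_mor (V, Y, comp_cls V W Y c1 c2) = (fst V, fst Y, h2 \<circ> h1))"
proof -
  obtain X1 f1 g1 where e1: "(SOME r. r \<in> c1) = (X1, f1, g1)" by (metis prod_cases3)
  obtain X2 f2 g2 where e2: "(SOME r. r \<in> c2) = (X2, f2, g2)" by (metis prod_cases3)
  have i1: "(X1, f1, g1) \<in> c1" using some_in_hom[OF c1] e1 by simp
  have i2: "(X2, f2, g2) \<in> c2" using some_in_hom[OF c2] e2 by simp
  have r1: "(X1, f1, g1) \<in> cospans V W" using hom_cospans[OF c1 i1] .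
  have r2: "(X2, f2, g2) \<in> cospans W Y" using hom_cospans[OF c2 i2] .
  have "\<exists>Z a b. ppo W X1 g1 X2 f2 Z a b"
    using ppo_exists[OF W] cospansD[OF r1] cospansD[OF r2] by blast
  then have ex: "\<exists>x. (\<lambda>(Z, a, b). ppo W X1 g1 X2 f2 Z a b) x" by auto
  obtain Z a b where e3: "(SOME (Z, a, b). ppo W X1 g1 X2 f2 Z a b) = (Z, a, b)" by (metis prod_cases3)
  have P: "ppo W X1 g1 X2 f2 Z a b" using someI_ex[OF ex] e3 by simp
  have cc: "comp_cls V W Y c1 c2 = cls V Y (Z, a \<circ> f1, b \<circ> g2)"
    unfolding comp_cls_def e1 e2 by (simp add: e3)
  note r3 = eps_comp_fun(1)[OF V W Y r1 r2 P]
  note ee = eps_comp_fun(2)[OF V W Y r1 r2 P]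
  show ?thesis
  proof (intro conjI exI)
    show "comp_cls V W Y c1 c2 \<in> Tq_hom V Y" unfolding cc by (rule cls_hom[OF r3])
    show "eps_mor (V, W, c1) = (fst V, fst W, eps_cosp V W (X1, f1, g1))" by (rule eps_mor_eq[OF W c1 i1])
    show "eps_mor (W, Y, c2) = (fst W, fst Y, eps_cosp W Y (X2, f2, g2))" by (rule eps_mor_eq[OF Y c2 i2])
    show "eps_mor (V, Y, comp_cls V W Y c1 c2) = (fst V, fst Y, eps_cosp W Y (X2, f2, g2) \<circ> eps_cosp V W (X1, f1, g1))"
      unfolding cc using eps_mor_eq[OF Y cls_hom[OF r3] cls_self[OF r3]] ee by simp
  qed
qed

lemma Ff_sp: "is_Ffunctor Fo Fm \<Longrightarrow> F2sp (Fo n)" by (simp add: is_Ffunctor_def)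
lemma Ff_lin: "is_Ffunctor Fo Fm \<Longrightarrow> Ef_map n m f \<Longrightarrow> F2lin (Fo n) (Fo m) (Fm (n, m, f))"
  by (simp add: is_Ffunctor_def)
lemma Ff_id: "is_Ffunctor Fo Fm \<Longrightarrow> x \<in> Fo n \<Longrightarrow> Fm (n, n, fid n) x = x"
  by (simp add: is_Ffunctor_def)
lemma Ff_comp: "is_Ffunctor Fo Fm \<Longrightarrow> Ef_map n m f \<Longrightarrow> Ef_map m k g \<Longrightarrow> x \<in> Fo n \<Longrightarrow>
    Fm (n, k, g \<circ> f) x = Fm (m, k, g) (Fm (n, m, f) x)"
  unfolding is_Ffunctor_def by blast

lemma F2lin_in: "F2lin A B h \<Longrightarrow> x \<in> A \<Longrightarrow> h x \<in> B" by (simp add: F2lin_def)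
lemma F2lin_add: "F2lin A B h \<Longrightarrow> x \<in> A \<Longrightarrow> y \<in> A \<Longrightarrow> h (x + y) = h x + h y" by (simp add: F2lin_def)
lemma F2sp_0: "F2sp A \<Longrightarrow> 0 \<in> A" by (simp add: F2sp_def)
lemma F2sp_add: "F2sp A \<Longrightarrow> x \<in> A \<Longrightarrow> y \<in> A \<Longrightarrow> x + y \<in> A" by (simp add: F2sp_def)
lemma F2lin_0: "F2sp A \<Longrightarrow> F2lin A B h \<Longrightarrow> h 0 = 0"
  using F2lin_add[of A B h 0 0] F2sp_0[of A] by simp

lemma Ff_retract:
  assumes F: "is_Ffunctor Fo Fm" and x: "x \<in> Fo n" and nN: "n \<le> N"
  shows "Fm (N, n, prj N n) (Fm (n, N, fid n) x) = x"
proof -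
  have "Fm (N, n, prj N n) (Fm (n, N, fid n) x) = Fm (n, n, prj N n \<circ> fid n) x"
    using Ff_comp[OF F Ef_emb[OF nN] Ef_prj x] by simp
  also have "\<dots> = x" using prj_emb[OF nN] Ff_id[OF F x] by simp
  finally show ?thesis .
qed

lemma transfer_map:
  assumes f: "Ef_map n m f" and nN: "n \<le> N" and mM: "m \<le> M"
  shows "Ef_map N M (fid m \<circ> f \<circ> prj N n)"
    and "(fid m \<circ> f \<circ> prj N n) \<circ> fid n = fid m \<circ> f"
    and "prj M m \<circ> (fid m \<circ> f \<circ> prj N n) = f \<circ> prj N n"
proof -
  show "Ef_map N M (fid m \<circ> f \<circ> prj N n)"
    using Ef_map_comp[OF Ef_prj Ef_map_comp[OF f Ef_emb[OF mM]]] .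
  show "(fid m \<circ> f \<circ> prj N n) \<circ> fid n = fid m \<circ> f"
    using prj_emb[OF nN] comp_fid[OF f] by (simp add: o_assoc[symmetric])
  show "prj M m \<circ> (fid m \<circ> f \<circ> prj N n) = f \<circ> prj N n"
  proof -
    have pf: "prj M m \<circ> f = f"
    proof -
      have "prj M m \<circ> f = prj M m \<circ> (fid m \<circ> f)" using fid_comp[OF f] by simp
      also have "\<dots> = (prj M m \<circ> fid m) \<circ> f" by (simp only: o_assoc)
      also have "\<dots> = f" using prj_emb[OF mM] fid_comp[OF f] by simp
      finally show ?thesis .
    qed
    have "prj M m \<circ> (fid m \<circ> f \<circ> prj N n) = (prj M m \<circ> (fid m \<circ> f)) \<circ> prj N n" by (simp only: o_assoc)
    also have "\<dots> = f \<circ> prj N n" using fid_comp[OF f] pf by simp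
    finally show ?thesis .
  qed
qed

lemma Ff_transfer:
  assumes F: "is_Ffunctor Fo Fm" and f: "Ef_map n m f" and nN: "n \<le> N" and mM: "m \<le> M" and x: "x \<in> Fo n"
  shows "Fm (m, M, fid m) (Fm (n, m, f) x) = Fm (N, M, fid m \<circ> f \<circ> prj N n) (Fm (n, N, fid n) x)"
proof -
  have "Fm (m, M, fid m) (Fm (n, m, f) x) = Fm (n, M, fid m \<circ> f) x"
    using Ff_comp[OF F f Ef_emb[OF mM] x] by simp
  also have "\<dots> = Fm (n, M, (fid m \<circ> f \<circ> prj N n) \<circ> fid n) x" using transfer_map(2)[OF f nN mM] by simp
  also have "\<dots> = Fm (N, M, fid m \<circ> f \<circ> prj N n) (Fm (n, N, fid n) x)"
    using Ff_comp[OF F Ef_emb[OF nN] transfer_map(1)[OF f nN mM] x] .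
  finally show ?thesis .
qed

lemma Hyp_ge: "n \<le> fst (Hyp n)" by (simp add: Hyp_dim)

lemma iota_nat_nat:
  assumes e: "Ef_nat Fo Fm Go Gm \<eta>"
  shows "Tq_nat (iota_ob Fo) (iota_mor Fm) (iota_ob Go) (iota_mor Gm) (iota_nat \<eta>)"
  unfolding Tq_nat_def
proof (intro conjI ballI)
  fix V assume "V \<in> Tq_obj"
  show "F2lin (iota_ob Fo V) (iota_ob Go V) (iota_nat \<eta> V)"
    using e by (simp add: Ef_nat_def iota_ob_def iota_nat_def)
next
  fix V W c x assume V: "V \<in> Tq_obj" and W: "W \<in> Tq_obj" and c: "c \<in> Tq_hom V W" and x: "x \<in> iota_ob Fo V"
  obtain h where h: "eps_mor (V, W, c) = (fst V, fst W, h)" "Ef_map (fst V) (fst W) h"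
    using eps_mor_Ef[OF W c] by blast
  show "iota_nat \<eta> W (iota_mor Fm (V, W, c) x) = iota_mor Gm (V, W, c) (iota_nat \<eta> V x)"
    using e h x by (simp add: Ef_nat_def iota_ob_def iota_nat_def iota_mor_def)
qed

lemma part1:
  "is_Ffunctor F1o F1m \<and> is_Ffunctor F2o F2m \<and> is_Ffunctor F3o F3m
      \<and> Ef_nat F1o F1m F2o F2m \<alpha> \<and> Ef_nat F2o F2m F3o F3m \<beta>
      \<and> (\<forall>n. short_exact (F1o n) (F2o n) (F3o n) (\<alpha> n) (\<beta> n))
      \<longrightarrow> Tq_nat (iota_ob F1o) (iota_mor F1m) (iota_ob F2o) (iota_mor F2m) (iota_nat \<alpha>)
        \<and> Tq_nat (iota_ob F2o) (iota_mor F2m) (iota_ob F3o) (iota_mor F3m) (iota_nat \<beta>)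
        \<and> (\<forall>V\<in>Tq_obj. short_exact (iota_ob F1o V) (iota_ob F2o V) (iota_ob F3o V)
                                    (iota_nat \<alpha> V) (iota_nat \<beta> V))"
proof (intro impI)
  assume a: "is_Ffunctor F1o F1m \<and> is_Ffunctor F2o F2m \<and> is_Ffunctor F3o F3m
      \<and> Ef_nat F1o F1m F2o F2m \<alpha> \<and> Ef_nat F2o F2m F3o F3m \<beta>
      \<and> (\<forall>n. short_exact (F1o n) (F2o n) (F3o n) (\<alpha> n) (\<beta> n))"
  have t1: "Tq_nat (iota_ob F1o) (iota_mor F1m) (iota_ob F2o) (iota_mor F2m) (iota_nat \<alpha>)"
    using a iota_nat_nat by blast

  have t2: "Tq_nat (iota_ob F2o) (iota_mor F2m) (iota_ob F3o) (iota_mor F3m) (iota_nat \<beta>)"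
    using a iota_nat_nat by blast
  have t3: "\<forall>V\<in>Tq_obj. short_exact (iota_ob F1o V) (iota_ob F2o V) (iota_ob F3o V)
                                    (iota_nat \<alpha> V) (iota_nat \<beta> V)"
    using a by (simp add: iota_ob_def iota_nat_def)
  show "Tq_nat (iota_ob F1o) (iota_mor F1m) (iota_ob F2o) (iota_mor F2m) (iota_nat \<alpha>)
        \<and> Tq_nat (iota_ob F2o) (iota_mor F2m) (iota_ob F3o) (iota_mor F3m) (iota_nat \<beta>)
        \<and> (\<forall>V\<in>Tq_obj. short_exact (iota_ob F1o V) (iota_ob F2o V) (iota_ob F3o V)
                                    (iota_nat \<alpha> V) (iota_nat \<beta> V))" using t1 t2 t3 by blast
qed

lemma part2:
  "is_Ffunctor Fo Fm \<and> is_Ffunctor Go Gm \<longrightarrow>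
      (\<forall>V\<in>Tq_obj. iota_ob (ftens_ob Fo Go) V = ftens_ob (iota_ob Fo) (iota_ob Go) V)
      \<and> (\<forall>V\<in>Tq_obj. \<forall>W\<in>Tq_obj. \<forall>c\<in>Tq_hom V W.
           iota_mor (ftens_mor Fo Go Fm Gm) (V, W, c)
           = ftens_mor (iota_ob Fo) (iota_ob Go) (iota_mor Fm) (iota_mor Gm) (V, W, c))"
  by (simp add: iota_ob_def ftens_ob_def iota_mor_def ftens_mor_def eps_mor_def)

lemma nat_theta:
  assumes T: "Tq_nat (iota_ob Fo) (iota_mor Fm) (iota_ob Go) (iota_mor Gm) \<theta>"
    and V: "V \<in> Tq_obj" and W: "W \<in> Tq_obj" and h: "Ef_map (fst V) (fst W) h" and x: "x \<in> Fo (fst V)"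
  shows "\<theta> W (Fm (fst V, fst W, h) x) = Gm (fst V, fst W, h) (\<theta> V x)"
proof -
  obtain c where c: "c \<in> Tq_hom V W" "eps_mor (V, W, c) = (fst V, fst W, h)" using eps_full[OF V W h] by blast
  have "\<theta> W (iota_mor Fm (V, W, c) x) = iota_mor Gm (V, W, c) (\<theta> V x)"
    using T V W c(1) x by (simp add: Tq_nat_def iota_ob_def)
  then show ?thesis using c(2) by (simp add: iota_mor_def)
qed

lemma theta_lin:
  assumes T: "Tq_nat (iota_ob Fo) (iota_mor Fm) (iota_ob Go) (iota_mor Gm) \<theta>" and V: "V \<in> Tq_obj"
  shows "F2lin (Fo (fst V)) (Go (fst V)) (\<theta> V)"
  using T V by (simp add: Tq_nat_def iota_ob_def)

lemma part3:
  "is_Ffunctor Fo Fm \<and> is_Ffunctor Go Gm \<longrightarrow>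
      (\<forall>\<eta>. Ef_nat Fo Fm Go Gm \<eta> \<longrightarrow>
           Tq_nat (iota_ob Fo) (iota_mor Fm) (iota_ob Go) (iota_mor Gm) (iota_nat \<eta>))
      \<and> (\<forall>\<eta> \<eta>'. Ef_nat Fo Fm Go Gm \<eta> \<and> Ef_nat Fo Fm Go Gm \<eta>'
           \<and> (\<forall>V\<in>Tq_obj. \<forall>x\<in>iota_ob Fo V. iota_nat \<eta> V x = iota_nat \<eta>' V x)
           \<longrightarrow> (\<forall>n. \<forall>x\<in>Fo n. \<eta> n x = \<eta>' n x))
      \<and> (\<forall>\<theta>. Tq_nat (iota_ob Fo) (iota_mor Fm) (iota_ob Go) (iota_mor Gm) \<theta> \<longrightarrow>
           (\<exists>\<eta>. Ef_nat Fo Fm Go Gm \<eta>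
                \<and> (\<forall>V\<in>Tq_obj. \<forall>x\<in>iota_ob Fo V. \<theta> V x = iota_nat \<eta> V x)))"
proof (intro impI conjI)
  assume FG: "is_Ffunctor Fo Fm \<and> is_Ffunctor Go Gm"
  show "\<forall>\<eta>. Ef_nat Fo Fm Go Gm \<eta> \<longrightarrow>
           Tq_nat (iota_ob Fo) (iota_mor Fm) (iota_ob Go) (iota_mor Gm) (iota_nat \<eta>)"
    using iota_nat_nat by blast
next
  assume FG: "is_Ffunctor Fo Fm \<and> is_Ffunctor Go Gm"
  then have F: "is_Ffunctor Fo Fm" and G: "is_Ffunctor Go Gm" by auto
  show "\<forall>\<eta> \<eta>'. Ef_nat Fo Fm Go Gm \<eta> \<and> Ef_nat Fo Fm Go Gm \<eta>'
           \<and> (\<forall>V\<in>Tq_obj. \<forall>x\<in>iota_ob Fo V. iota_nat \<eta> V x = iota_nat \<eta>' V x)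
           \<longrightarrow> (\<forall>n. \<forall>x\<in>Fo n. \<eta> n x = \<eta>' n x)"
  proof (intro impI allI ballI)
    fix \<eta> \<eta>' n x assume a: "Ef_nat Fo Fm Go Gm \<eta> \<and> Ef_nat Fo Fm Go Gm \<eta>'
           \<and> (\<forall>V\<in>Tq_obj. \<forall>x\<in>iota_ob Fo V. iota_nat \<eta> V x = iota_nat \<eta>' V x)" and x: "x \<in> Fo n"
    define N where "N = fst (Hyp n)"
    have nN: "n \<le> N" using Hyp_ge by (simp add: N_def)
    define y where "y = Fm (n, N, fid n) x"
    have y: "y \<in> Fo N" using F2lin_in[OF Ff_lin[OF F Ef_emb[OF nN]] x] by (simp add: y_def)
    have xy: "x = Fm (N, n, prj N n) y" using Ff_retract[OF F x nN] by (simp add: y_def)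
    have e1: "\<eta> n (Fm (N, n, prj N n) y) = Gm (N, n, prj N n) (\<eta> N y)"
      using a y Ef_prj by (simp add: Ef_nat_def)
    have e2: "\<eta>' n (Fm (N, n, prj N n) y) = Gm (N, n, prj N n) (\<eta>' N y)"
      using a y Ef_prj by (simp add: Ef_nat_def)
    have "\<eta> N y = \<eta>' N y" using a Hyp_obj[of n] y by (simp add: iota_nat_def iota_ob_def N_def)
    then show "\<eta> n x = \<eta>' n x" using e1 e2 xy by simp
  qed
next
  assume FG: "is_Ffunctor Fo Fm \<and> is_Ffunctor Go Gm"
  then have F: "is_Ffunctor Fo Fm" and G: "is_Ffunctor Go Gm" by auto
  show "\<forall>\<theta>. Tq_nat (iota_ob Fo) (iota_mor Fm) (iota_ob Go) (iota_mor Gm) \<theta> \<longrightarrow>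
           (\<exists>\<eta>. Ef_nat Fo Fm Go Gm \<eta> \<and> (\<forall>V\<in>Tq_obj. \<forall>x\<in>iota_ob Fo V. \<theta> V x = iota_nat \<eta> V x))"
  proof (intro allI impI)
    fix \<theta> assume T: "Tq_nat (iota_ob Fo) (iota_mor Fm) (iota_ob Go) (iota_mor Gm) \<theta>"
    define NN where "NN = (\<lambda>n. fst (Hyp n))"
    have nN: "n \<le> NN n" for n using Hyp_ge by (simp add: NN_def)
    define \<eta> where "\<eta> = (\<lambda>n x. Gm (NN n, n, prj (NN n) n) (\<theta> (Hyp n) (Fm (n, NN n, fid n) x)))"
    have thl: "F2lin (Fo (NN n)) (Go (NN n)) (\<theta> (Hyp n))" for n
      using theta_lin[OF T Hyp_obj] by (simp add: NN_def)
    have lin: "F2lin (Fo n) (Go n) (\<eta> n)" for n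
    proof -
      have l1: "F2lin (Fo n) (Fo (NN n)) (Fm (n, NN n, fid n))" using Ff_lin[OF F Ef_emb[OF nN]] .
      have l3: "F2lin (Go (NN n)) (Go n) (Gm (NN n, n, prj (NN n) n))" using Ff_lin[OF G Ef_prj] .
      show ?thesis unfolding F2lin_def \<eta>_def
        using F2lin_in[OF l1] F2lin_in[OF thl] F2lin_in[OF l3]
          F2lin_add[OF l1] F2lin_add[OF thl] F2lin_add[OF l3] by simp
    qed
    have natural: "\<eta> m (Fm (n, m, f) x) = Gm (n, m, f) (\<eta> n x)" if f: "Ef_map n m f" and x: "x \<in> Fo n" for n m f x
    proof -
      define F' where "F' = fid m \<circ> f \<circ> prj (NN n) n"
      have F'E: "Ef_map (NN n) (NN m) F'" using transfer_map(1)[OF f nN nN] by (simp add: F'_def)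
      define y where "y = Fm (n, NN n, fid n) x"
      have y: "y \<in> Fo (NN n)" using F2lin_in[OF Ff_lin[OF F Ef_emb[OF nN]] x] by (simp add: y_def)
      have ty: "\<theta> (Hyp n) y \<in> Go (NN n)" using F2lin_in[OF thl y] .
      have "\<eta> m (Fm (n, m, f) x) = Gm (NN m, m, prj (NN m) m) (\<theta> (Hyp m) (Fm (NN n, NN m, F') y))"
        using Ff_transfer[OF F f nN nN x] by (simp add: \<eta>_def F'_def y_def)
      also have "\<theta> (Hyp m) (Fm (NN n, NN m, F') y) = Gm (NN n, NN m, F') (\<theta> (Hyp n) y)"
        using nat_theta[OF T Hyp_obj Hyp_obj, of n m F' y] F'E y by (simp add: NN_def)
      also have "Gm (NN m, m, prj (NN m) m) (Gm (NN n, NN m, F') (\<theta> (Hyp n) y))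
           = Gm (NN n, m, prj (NN m) m \<circ> F') (\<theta> (Hyp n) y)"
        using Ff_comp[OF G F'E Ef_prj ty] by simp
      also have "prj (NN m) m \<circ> F' = f \<circ> prj (NN n) n" using transfer_map(3)[OF f nN nN] by (simp add: F'_def)
      also have "Gm (NN n, m, f \<circ> prj (NN n) n) (\<theta> (Hyp n) y) = Gm (n, m, f) (\<eta> n x)"
        using Ff_comp[OF G Ef_prj f ty] by (simp add: \<eta>_def y_def)
      finally show ?thesis .
    qed
    have agree: "\<theta> V x = iota_nat \<eta> V x" if V: "V \<in> Tq_obj" and x: "x \<in> iota_ob Fo V" for V x
    proof -
      define n where "n = fst V"
      have xn: "x \<in> Fo n" using x by (simp add: iota_ob_def n_def)
      define y where "y = Fm (n, NN n, fid n) x"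
      have y: "y \<in> Fo (NN n)" using F2lin_in[OF Ff_lin[OF F Ef_emb[OF nN]] xn] by (simp add: y_def)
      have xy: "x = Fm (NN n, n, prj (NN n) n) y" using Ff_retract[OF F xn nN] by (simp add: y_def)
      have "\<theta> V (Fm (NN n, n, prj (NN n) n) y) = Gm (NN n, n, prj (NN n) n) (\<theta> (Hyp n) y)"
        using nat_theta[OF T Hyp_obj V, of n "prj (NN n) n" y] Ef_prj y by (simp add: NN_def n_def)
      then have "\<theta> V x = Gm (NN n, n, prj (NN n) n) (\<theta> (Hyp n) y)" using xy by simp
      then show ?thesis by (simp add: iota_nat_def \<eta>_def n_def y_def)
    qed
    have "Ef_nat Fo Fm Go Gm \<eta>" unfolding Ef_nat_def using lin natural by blast
    then show "\<exists>\<eta>. Ef_nat Fo Fm Go Gm \<eta> \<and> (\<forall>V\<in>Tq_obj. \<forall>x\<in>iota_ob Fo V. \<theta> V x = iota_nat \<eta> V x)"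
      using agree by blast
  qed
qed

lemma part4:
  assumes S: "Ef_simple So Sm"
  shows "Tq_simple (iota_ob So) (iota_mor Sm)"
proof -
  have F: "is_Ffunctor So Sm" using S by (simp add: Ef_simple_def)
  have nz: "\<exists>n. So n \<noteq> {0}" using S by (simp add: Ef_simple_def)
  have simp_prop: "\<And>H. Ef_subfunctor So Sm H \<Longrightarrow> (\<forall>n. H n = {0}) \<or> (\<forall>n. H n = So n)"
    using S by (simp add: Ef_simple_def)
  define NN where "NN = (\<lambda>n. fst (Hyp n))"
  have nN: "n \<le> NN n" for n using Hyp_ge by (simp add: NN_def)
  have HypN: "fst (Hyp n) = NN n" for n by (simp add: NN_def)
  have Fq: "is_Fquad (iota_ob So) (iota_mor Sm)"
    unfolding is_Fquad_def
  proof (intro conjI ballI)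
    fix V assume "V \<in> Tq_obj" then show "F2sp (iota_ob So V)" using Ff_sp[OF F] by (simp add: iota_ob_def)
  next
    fix V W c assume V: "V \<in> Tq_obj" and W: "W \<in> Tq_obj" and c: "c \<in> Tq_hom V W"
    obtain h where h: "eps_mor (V, W, c) = (fst V, fst W, h)" "Ef_map (fst V) (fst W) h"
      using eps_mor_Ef[OF W c] by blast
    show "F2lin (iota_ob So V) (iota_ob So W) (iota_mor Sm (V, W, c))"
      using Ff_lin[OF F h(2)] h(1) by (simp add: iota_ob_def iota_mor_def)
  next
    fix V x assume V: "V \<in> Tq_obj" and x: "x \<in> iota_ob So V"
    show "iota_mor Sm (Tq_id V) x = x" using eps_id[OF V] Ff_id[OF F] x by (simp add: iota_mor_def iota_ob_def)
  next
    fix V W Y c1 c2 x assume V: "V \<in> Tq_obj" and W: "W \<in> Tq_obj" and Y: "Y \<in> Tq_obj"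
      and c1: "c1 \<in> Tq_hom V W" and c2: "c2 \<in> Tq_hom W Y" and x: "x \<in> iota_ob So V"
    obtain h1 h2 where e: "eps_mor (V, W, c1) = (fst V, fst W, h1)" "eps_mor (W, Y, c2) = (fst W, fst Y, h2)"
      "eps_mor (V, Y, comp_cls V W Y c1 c2) = (fst V, fst Y, h2 \<circ> h1)"
      using eps_comp[OF V W Y c1 c2] by blast
    obtain k1 where k1: "eps_mor (V, W, c1) = (fst V, fst W, k1)" "Ef_map (fst V) (fst W) k1"
      using eps_mor_Ef[OF W c1] by blast
    obtain k2 where k2: "eps_mor (W, Y, c2) = (fst W, fst Y, k2)" "Ef_map (fst W) (fst Y) k2"
      using eps_mor_Ef[OF Y c2] by blast
    have "h1 = k1" "h2 = k2" using e(1,2) k1(1) k2(1) by auto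
    then show "iota_mor Sm (V, Y, comp_cls V W Y c1 c2) x = iota_mor Sm (W, Y, c2) (iota_mor Sm (V, W, c1) x)"
      using Ff_comp[OF F k1(2) k2(2)] x e by (simp add: iota_mor_def iota_ob_def)
  qed
  have nz2: "\<exists>V\<in>Tq_obj. iota_ob So V \<noteq> {0}"
  proof -
    obtain n where n: "So n \<noteq> {0}" using nz by blast
    obtain x where x: "x \<in> So n" "x \<noteq> 0" using n F2sp_0[OF Ff_sp[OF F]] by blast
    define y where "y = Sm (n, NN n, fid n) x"
    have y: "y \<in> So (NN n)" using F2lin_in[OF Ff_lin[OF F Ef_emb[OF nN]] x(1)] by (simp add: y_def)
    have "Sm (NN n, n, prj (NN n) n) y = x" using Ff_retract[OF F x(1) nN] by (simp add: y_def)
    moreover have "Sm (NN n, n, prj (NN n) n) 0 = 0" using F2lin_0[OF Ff_sp[OF F] Ff_lin[OF F Ef_prj]] .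
    ultimately have "y \<noteq> 0" using x(2) by auto
    then have "iota_ob So (Hyp n) \<noteq> {0}" using y by (auto simp: iota_ob_def HypN)
    then show ?thesis using Hyp_obj by blast
  qed
  have subs: "(\<forall>V\<in>Tq_obj. H V = {0}) \<or> (\<forall>V\<in>Tq_obj. H V = iota_ob So V)"
    if H: "Tq_subfunctor (iota_ob So) (iota_mor Sm) H" for H
  proof -
    have Hsp: "V \<in> Tq_obj \<Longrightarrow> F2sp (H V)" for V using H by (simp add: Tq_subfunctor_def)
    have Hsub: "V \<in> Tq_obj \<Longrightarrow> H V \<subseteq> So (fst V)" for V using H by (simp add: Tq_subfunctor_def iota_ob_def)
    have Hcl: "Sm (fst V, fst W, h) x \<in> H W"
      if V: "V \<in> Tq_obj" and W: "W \<in> Tq_obj" and h: "Ef_map (fst V) (fst W) h" and x: "x \<in> H V" for V W h x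
    proof -
      obtain c where c: "c \<in> Tq_hom V W" "eps_mor (V, W, c) = (fst V, fst W, h)" using eps_full[OF V W h] by blast
      have "iota_mor Sm (V, W, c) ` H V \<subseteq> H W" using H V W c(1) by (simp add: Tq_subfunctor_def)
      then show ?thesis using x c(2) by (auto simp: iota_mor_def)
    qed
    define H' where "H' = (\<lambda>n. {x \<in> So n. Sm (n, NN n, fid n) x \<in> H (Hyp n)})"
    have lin_i: "F2lin (So n) (So (NN n)) (Sm (n, NN n, fid n))" for n using Ff_lin[OF F Ef_emb[OF nN]] .
    have sub': "Ef_subfunctor So Sm H'"
      unfolding Ef_subfunctor_def
    proof (intro conjI allI impI)
      fix n
      have sp: "F2sp (So n)" using Ff_sp[OF F] .
      have hs: "F2sp (H (Hyp n))" using Hsp[OF Hyp_obj] .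
      show "F2sp (H' n)" unfolding F2sp_def H'_def
      proof (intro conjI ballI)
        show "0 \<in> {x \<in> So n. Sm (n, NN n, fid n) x \<in> H (Hyp n)}"
          using F2sp_0[OF sp] F2lin_0[OF sp lin_i] F2sp_0[OF hs] by simp
      next
        fix x y assume x: "x \<in> {x \<in> So n. Sm (n, NN n, fid n) x \<in> H (Hyp n)}"
          and y: "y \<in> {x \<in> So n. Sm (n, NN n, fid n) x \<in> H (Hyp n)}"
        then show "x + y \<in> {x \<in> So n. Sm (n, NN n, fid n) x \<in> H (Hyp n)}"
          using F2sp_add[OF sp] F2lin_add[OF lin_i] F2sp_add[OF hs] by simp
      next
        fix x assume "x \<in> {x \<in> So n. Sm (n, NN n, fid n) x \<in> H (Hyp n)}"
        then show "x + x = 0" using sp by (simp add: F2sp_def)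
      qed
      show "H' n \<subseteq> So n" by (auto simp: H'_def)
    next
      fix n m f assume f: "Ef_map n m f"
      show "Sm (n, m, f) ` H' n \<subseteq> H' m"
      proof
        fix z assume "z \<in> Sm (n, m, f) ` H' n"
        then obtain x where x: "x \<in> So n" "Sm (n, NN n, fid n) x \<in> H (Hyp n)" "z = Sm (n, m, f) x"
          by (auto simp: H'_def)
        have zS: "z \<in> So m" using F2lin_in[OF Ff_lin[OF F f] x(1)] x(3) by simp
        have "Sm (NN n, NN m, fid m \<circ> f \<circ> prj (NN n) n) (Sm (n, NN n, fid n) x) \<in> H (Hyp m)"
          using Hcl[OF Hyp_obj Hyp_obj, of n m "fid m \<circ> f \<circ> prj (NN n) n"] transfer_map(1)[OF f nN nN] x(2)
          by (simp add: HypN)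
        then have "Sm (m, NN m, fid m) z \<in> H (Hyp m)" using Ff_transfer[OF F f nN nN x(1)] x(3) by simp
        then show "z \<in> H' m" using zS by (simp add: H'_def)
      qed
    qed
    show ?thesis
    proof (cases "\<forall>n. H' n = {0}")
      case True
      have "H V = {0}" if V: "V \<in> Tq_obj" for V
      proof
        show "{0} \<subseteq> H V" using F2sp_0[OF Hsp[OF V]] by simp
        show "H V \<subseteq> {0}"
        proof
          fix x assume x: "x \<in> H V"
          have "Sm (fst V, NN (fst V), fid (fst V)) x \<in> H (Hyp (fst V))"
            using Hcl[OF V Hyp_obj[of "fst V"] Ef_emb[OF Hyp_ge[of "fst V"]] x] by (simp add: HypN)
          then have "x \<in> H' (fst V)" using Hsub[OF V] x by (auto simp: H'_def)
          then show "x \<in> {0}" using True by simp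
        qed
      qed
      then show ?thesis by blast
    next
      case False
      then have all: "\<forall>n. H' n = So n" using simp_prop[OF sub'] by blast
      have "H V = iota_ob So V" if V: "V \<in> Tq_obj" for V
      proof
        show "H V \<subseteq> iota_ob So V" using Hsub[OF V] by (simp add: iota_ob_def)
        show "iota_ob So V \<subseteq> H V"
        proof
          fix x assume "x \<in> iota_ob So V"
          then have x: "x \<in> So (fst V)" by (simp add: iota_ob_def)
          then have "x \<in> H' (fst V)" using all by simp
          then have "Sm (fst V, NN (fst V), fid (fst V)) x \<in> H (Hyp (fst V))" by (simp add: H'_def)
          then have "Sm (NN (fst V), fst V, prj (NN (fst V)) (fst V)) (Sm (fst V, NN (fst V), fid (fst V)) x) \<in> H V"
            using Hcl[OF Hyp_obj V, of "fst V" "prj (NN (fst V)) (fst V)"] Ef_prj by (simp add: HypN)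
          then show "x \<in> H V" using Ff_retract[OF F x nN] by simp
        qed
      qed
      then show ?thesis by blast
    qed
  qed
  show ?thesis unfolding Tq_simple_def using Fq nz2 subs by blast
qed

theorem theorem3p1:
  shows
  \<comment> \<open>(1) iota is exact: it sends short exact sequences in F to short exact sequences in F_quad\<close>
  "(\<forall>(F1o :: nat \<Rightarrow> 'a::ab_group_add set) F1m (F2o :: nat \<Rightarrow> 'b::ab_group_add set) F2m
      (F3o :: nat \<Rightarrow> 'c::ab_group_add set) F3m \<alpha> \<beta>.
      is_Ffunctor F1o F1m \<and> is_Ffunctor F2o F2m \<and> is_Ffunctor F3o F3m
      \<and> Ef_nat F1o F1m F2o F2m \<alpha> \<and> Ef_nat F2o F2m F3o F3m \<beta>
      \<and> (\<forall>n. short_exact (F1o n) (F2o n) (F3o n) (\<alpha> n) (\<beta> n))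
      \<longrightarrow> Tq_nat (iota_ob F1o) (iota_mor F1m) (iota_ob F2o) (iota_mor F2m) (iota_nat \<alpha>)
        \<and> Tq_nat (iota_ob F2o) (iota_mor F2m) (iota_ob F3o) (iota_mor F3m) (iota_nat \<beta>)
        \<and> (\<forall>V\<in>Tq_obj. short_exact (iota_ob F1o V) (iota_ob F2o V) (iota_ob F3o V)
                                    (iota_nat \<alpha> V) (iota_nat \<beta> V)))
   \<and>
  \<comment> \<open>(2) iota preserves (pointwise) tensor products\<close>
   (\<forall>(Fo :: nat \<Rightarrow> 'a::ab_group_add set) Fm (Go :: nat \<Rightarrow> 'b::ab_group_add set) Gm.
      is_Ffunctor Fo Fm \<and> is_Ffunctor Go Gm \<longrightarrow>
      (\<forall>V\<in>Tq_obj. iota_ob (ftens_ob Fo Go) V = ftens_ob (iota_ob Fo) (iota_ob Go) V)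
      \<and> (\<forall>V\<in>Tq_obj. \<forall>W\<in>Tq_obj. \<forall>c\<in>Tq_hom V W.
           iota_mor (ftens_mor Fo Go Fm Gm) (V, W, c)
           = ftens_mor (iota_ob Fo) (iota_ob Go) (iota_mor Fm) (iota_mor Gm) (V, W, c)))
   \<and>
  \<comment> \<open>(3) iota is fully faithful\<close>
   (\<forall>(Fo :: nat \<Rightarrow> 'a::ab_group_add set) Fm (Go :: nat \<Rightarrow> 'b::ab_group_add set) Gm.
      is_Ffunctor Fo Fm \<and> is_Ffunctor Go Gm \<longrightarrow>
      (\<forall>\<eta>. Ef_nat Fo Fm Go Gm \<eta> \<longrightarrow>
           Tq_nat (iota_ob Fo) (iota_mor Fm) (iota_ob Go) (iota_mor Gm) (iota_nat \<eta>))
      \<and> (\<forall>\<eta> \<eta>'. Ef_nat Fo Fm Go Gm \<eta> \<and> Ef_nat Fo Fm Go Gm \<eta>'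
           \<and> (\<forall>V\<in>Tq_obj. \<forall>x\<in>iota_ob Fo V. iota_nat \<eta> V x = iota_nat \<eta>' V x)
           \<longrightarrow> (\<forall>n. \<forall>x\<in>Fo n. \<eta> n x = \<eta>' n x))
      \<and> (\<forall>\<theta>. Tq_nat (iota_ob Fo) (iota_mor Fm) (iota_ob Go) (iota_mor Gm) \<theta> \<longrightarrow>
           (\<exists>\<eta>. Ef_nat Fo Fm Go Gm \<eta>
                \<and> (\<forall>V\<in>Tq_obj. \<forall>x\<in>iota_ob Fo V. \<theta> V x = iota_nat \<eta> V x))))
   \<and>
  \<comment> \<open>(4) iota sends simple objects to simple objects\<close>
   (\<forall>(So :: nat \<Rightarrow> 'a::ab_group_add set) Sm.
      Ef_simple So Sm \<longrightarrow> Tq_simple (iota_ob So) (iota_mor Sm))"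
    apply (intro conjI)
     apply (intro allI, rule part1)
    apply (intro allI, rule part2)
   apply (intro allI, rule part3)
  apply (intro allI impI, erule part4)
  done

end
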